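(* Consider the hybrid system $\mathcal H$ described in the context and suppose Assumption 2 holds with $\alpha(s)=as$ for all $s\ge0$, for some $a>0$. Let $a_U\in(0,a]$ and $\mu>0$, and for each $i\in\{1,\dots,N\}$ choose: (i) $c_i\in[0,c_i^\star]$ and $\sigma_i\in[0,\sigma_i^\star]$, where $c_i^\star\ge0$, $\sigma_i^\star>0$ satisfy $\sigma_i^\star c_i^\star<1$; (ii) $\alpha_i(s)=a_is$ for $s\ge0$, with $a_i\ge a_i^\star$, where $a_i^\star>0$ satisfies $a_i^\star>\frac{a_U}{1-\sigma_i^\star c_i^\star}$; (iii) $b_i\in[0,1]$; (iv) $\varepsilon_i\in(0,\varepsilon_i^\star]$ where $\varepsilon_1^\star+\dots+\varepsilon_N^\star\le\frac{a_U\mu}{1+\varsigma}$, $\varsigma:=\max\{d_1c_1^\star,\dots,d_Nc_N^\star\}$, and $d_i:=\sigma_i^\star\big(1-\sigma_i^\star c_i^\star-\frac{a_U}{a_i^\star}\big)^{-1}>0$. Then each $d_i$ satisfies $d_i>\frac{\sigma_i^\star}{1-\sigma_i^\star c_i^\star}$, and for any input $w=(u,v)\in\mathcal L_{\mathcal W}$, any solution $q=(x,z,e,\eta)$ of $\mathcal H$ satisfies, for all $(t,j)\in\operatorname{dom}q$, $$V(x(t,j),z(t,j))+\sum_{i=1}^Nd_i\eta_i(t,j)\le e^{-a_Ut}\Big(V(x(0,0),z(0,0))+\sum_{i=1}^Nd_i\eta_i(0,0)\Big)+\mu+\frac{1}{a_U}\theta(\|v\|_{[0,t]}),$$ where $\theta$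 is from Assumption 2.
   Context: Notation: $\mathcal K_\infty$ is the class of continuous, strictly increasing, unbounded functions $\mathbb R_{\ge0}\to\mathbb R_{\ge0}$ vanishing at $0$; $|\cdot|$ is the Euclidean norm. For $S\subseteq\mathbb R^m$, $\mathcal L_S$ is the set of Lebesgue measurable, locally essentially bounded functions $\mathbb R_{\ge0}\to S$; $\|v\|_{[t_1,t_2]}:=\operatorname{ess\,sup}_{t\in[t_1,t_2]}|v(t)|$. Plant: $\dot x=f_p(x,u,v)$, $y=h(x)$, $x\in\mathbb R^{n_x}$, $u\in\mathcal L_{\mathcal U}$, $v\in\mathcal L_{\mathcal V}$, $\mathcal U\subseteq\mathbb R^{n_u}$, $\mathcal V\subseteq\mathbb R^{n_v}$; $f_p$ locally Lipschitz in $x$, continuous in the others; $h$ continuously differentiable. Output split into $N\in\{1,\dots,n_y\}$ nodes $y=(h_1(x),\dots,h_N(x))$, $y_i\in\mathbb R^{n_{y_i}}$. Observer data: continuous $f_o:\mathbb R^{n_z}\times\mathbb R^{n_u}\times\mathbb R^{n_y}\times\mathbb R^{n_y}\to\mathbb R^{n_z}$ ($n_z\ge n_x$), $\psi:\mathbb R^{n_z}\to\mathbb R^{n_x}$ with right inverse $\psi^{-R}$; the observer has access to $u$ at all times (Assumption 1). Assumption 2: there exist $\underline\alpha,\overline\alpha,\alpha,\gamma_1,\dots,\gamma_N,\theta\in\mathcal K_\infty$ and continuously differentiable $V:\mathbb R^{n_x}\times\mathbb R^{n_z}\to\mathbb R_{\ge0}$ such that for all $x,z$, $u\in\mathcal U$,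 $v\in\mathcal V$, $e=(e_1,\dots,e_N)\in\mathbb R^{n_y}$ ($e_i\in\mathbb R^{n_{y_i}}$), $\hat y\in\mathbb R^{n_y}$: $\underline\alpha(|x-\psi(z)|)\le V(x,z)\le\overline\alpha(|\psi^{-R}(x)-z|)$ and $\langle\nabla V(x,z),(f_p(x,u,v),f_o(z,u,h(x)+e,\hat y))\rangle\le-\alpha(V(x,z))+\sum_i\gamma_i(|e_i|)+\theta(|v|)$. Hybrid system $\mathcal H$ with design functions/parameters $\alpha_i\in\mathcal K_\infty$, $c_i\ge0$, $b_i\in[0,1]$, $\sigma_i\ge0$, $\varepsilon_i>0$: state $q=(x,z,e,\eta)\in\mathcal Q:=\mathbb R^{n_x}\times\mathbb R^{n_z}\times\mathbb R^{n_y}\times\mathbb R^N_{\ge0}$, input $w=(u,v)\in\mathcal W:=\mathcal U\times\mathcal V$. Flow map $F(q,w):=(f_p(x,u,v),f_o(z,u,h(x)+e,h(\psi(z))),g_1,\dots,g_N,\ell_1,\dots,\ell_N)$, $g_i=-\frac{\partial h_i(x)}{\partial x}f_p(x,u,v)$, $\ell_i=-\alpha_i(\eta_i)+c_i\gamma_i(|e_i|)$. $\mathcal C:=\bigcap_i\{q:\gamma_i(|e_i|)\le\sigma_i\alpha_i(\eta_i)+\varepsilon_i\}$, $\mathcal D:=\bigcup_i\mathcal D_i$, $\mathcal D_i:=\{q:\gamma_i(|e_i|)\ge\sigma_i\alpha_i(\eta_i)+\varepsilon_i\}$. $G(q):=\bigcup_iG_i(q)$, $G_i(q)=\emptyset$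 if $q\notin\mathcal D_i$, else $G_i(q)=\{(x,z,e',\eta')\}$ with $e'_i=0,\eta'_i=b_i\eta_i$, and $e'_j=e_j,\eta'_j=\eta_j$ for $j\ne i$. Dynamics: $\dot q=F(q,w)$, $q\in\mathcal C$; $q^+\in G(q)$, $q\in\mathcal D$. Solutions: a hybrid time domain is a set $E\subset\mathbb R_{\ge0}\times\mathbb Z_{\ge0}$ such that each truncation $E\cap([0,T]\times\{0,\dots,J\})$, $(T,J)\in E$, is a finite union $\bigcup_j([t_j,t_{j+1}],j)$ with $0=t_0\le t_1\le\dots$. A hybrid arc $q$ (with $q(\cdot,j)$ locally absolutely continuous) is a solution for input $w\in\mathcal L_{\mathcal W}$ if for each $j$ with $I^j:=\{t:(t,j)\in\operatorname{dom}q\}$ of nonempty interior, $\dot q(t,j)=F(q(t,j),w(t))$ and $q(t,j)\in\mathcal C$ for a.a. $t\in I^j$, and whenever $(t,j),(t,j+1)\in\operatorname{dom}q$, $q(t,j)\in\mathcal D$ and $q(t,j+1)\in G(q(t,j))$. *)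

theory Defs
  imports "HOL-Analysis.Analysis"
begin

text \<open>Class K-infinity: functions on the nonnegative reals (represented as real => real,
  only values on [0,oo) matter) that are continuous, strictly increasing, unbounded,
  and vanish at 0.\<close>
definition Kinf :: "(real \<Rightarrow> real) \<Rightarrow> bool" where
  "Kinf \<alpha> \<longleftrightarrow> continuous_on {0..} \<alpha> \<and> strict_mono_on {0..} \<alpha> \<and> \<alpha> 0 = 0
      \<and> (\<forall>M. \<exists>s\<ge>0. \<alpha> s > M)"

text \<open>Lebesgue measurable, locally essentially bounded functions [0,oo) -> S
  (represented as functions on real; only values on [0,oo) matter).\<close>
definition L_signal :: "'a::euclidean_space set \<Rightarrow> (real \<Rightarrow> 'a) \<Rightarrow> bool" where
  "L_signal S w \<longleftrightarrow> w \<in> borel_measurable (lebesgue_on {0..})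
     \<and> (\<forall>t\<ge>0. w t \<in> S)
     \<and> (\<forall>T\<ge>0. \<exists>M. AE t in lebesgue. t \<in> {0..T} \<longrightarrow> norm (w t) \<le> M)"

text \<open>Essential supremum of the norm of v over [t1,t2] (as a nonnegative number;
  it is 0 when [t1,t2] is a null set).\<close>
definition ess_sup_norm :: "(real \<Rightarrow> 'a::real_normed_vector) \<Rightarrow> real \<Rightarrow> real \<Rightarrow> real" where
  "ess_sup_norm v t1 t2 = Inf {M. 0 \<le> M \<and> (AE s in lebesgue. s \<in> {t1..t2} \<longrightarrow> norm (v s) \<le> M)}"

definition abs_continuous_on :: "(real \<Rightarrow> 'a::real_normed_vector) \<Rightarrow> real \<Rightarrow> real \<Rightarrow> bool" where
  "abs_continuous_on f a b \<longleftrightarrow>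
     (\<forall>\<epsilon>>0. \<exists>\<delta>>0. \<forall>(n::nat) (l::nat\<Rightarrow>real) (r::nat\<Rightarrow>real).
        (\<forall>k<n. a \<le> l k \<and> l k \<le> r k \<and> r k \<le> b)
        \<and> (\<forall>k<n. \<forall>k'<n. k \<noteq> k' \<longrightarrow> r k \<le> l k' \<or> r k' \<le> l k)
        \<and> (\<Sum>k<n. r k - l k) < \<delta>
        \<longrightarrow> (\<Sum>k<n. norm (f (r k) - f (l k))) < \<epsilon>)"

definition loc_abs_continuous_on :: "(real \<Rightarrow> 'a::real_normed_vector) \<Rightarrow> real set \<Rightarrow> bool" where
  "loc_abs_continuous_on f I \<longleftrightarrow> (\<forall>a b. {a..b} \<subseteq> I \<longrightarrow> abs_continuous_on f a b)"

definition hybrid_time_domain :: "(real \<times> nat) set \<Rightarrow> bool" where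
  "hybrid_time_domain E \<longleftrightarrow> E \<subseteq> {0..} \<times> UNIV \<and>
     (\<forall>(T,J)\<in>E. \<exists>tt::nat \<Rightarrow> real. tt 0 = 0 \<and> (\<forall>k\<le>J. tt k \<le> tt (Suc k)) \<and>
        E \<inter> ({0..T} \<times> {0..J}) = (\<Union>j\<in>{0..J}. {tt j..tt (Suc j)} \<times> {j}))"

definition flow_interval :: "(real \<times> nat) set \<Rightarrow> nat \<Rightarrow> real set" where
  "flow_interval E j = {t. (t, j) \<in> E}"

definition hybrid_arc :: "'q::real_normed_vector set \<Rightarrow> (real \<times> nat) set \<Rightarrow> (real \<times> nat \<Rightarrow> 'q) \<Rightarrow> bool" where
  "hybrid_arc Q E q \<longleftrightarrow> hybrid_time_domain E \<and> (\<forall>p\<in>E. q p \<in> Q)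
     \<and> (\<forall>j. loc_abs_continuous_on (\<lambda>t. q (t, j)) (flow_interval E j))"

definition hybrid_solution ::
  "'q::real_normed_vector set \<Rightarrow> ('q \<Rightarrow> 'w \<Rightarrow> 'q) \<Rightarrow> 'q set \<Rightarrow> 'q set \<Rightarrow> ('q \<Rightarrow> 'q set)
   \<Rightarrow> (real \<Rightarrow> 'w) \<Rightarrow> (real \<times> nat) set \<Rightarrow> (real \<times> nat \<Rightarrow> 'q) \<Rightarrow> bool" where
  "hybrid_solution Q F C D G w E q \<longleftrightarrow> hybrid_arc Q E q
     \<and> (\<forall>j. interior (flow_interval E j) \<noteq> {} \<longrightarrow>
          (AE t in lebesgue. t \<in> flow_interval E j \<longrightarrow>
              ((\<lambda>s. q (s, j)) has_vector_derivative F (q (t, j)) (w t)) (at t within flow_interval E j)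
              \<and> q (t, j) \<in> C))
     \<and> (\<forall>t j. (t, j) \<in> E \<and> (t, Suc j) \<in> E \<longrightarrow> q (t, j) \<in> D \<and> q (t, Suc j) \<in> G (q (t, j)))"

text \<open>The output space 'y (= R^{n_y}) is split into N nodes: every basis vector (coordinate)
  of 'y is assigned to a node in the finite index type 'n (N = CARD('n)); e_i is the
  component of e in the coordinates belonging to node i.\<close>
definition node_part :: "('y::euclidean_space \<Rightarrow> 'n) \<Rightarrow> 'n \<Rightarrow> 'y \<Rightarrow> 'y" where
  "node_part node i e = (\<Sum>b\<in>{b\<in>Basis. node b = i}. (e \<bullet> b) *\<^sub>R b)"

type_synonym ('x, 'z, 'y, 'n) hstate = "'x \<times> 'z \<times> 'y \<times> (real^'n)"

definition H_Q :: "('x::euclidean_space, 'z::euclidean_space, 'y::euclidean_space, 'n::finite) hstate set" where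
  "H_Q = {(x, z, e, \<eta>). \<forall>i. \<eta> $ i \<ge> 0}"

definition H_F ::
  "('x \<Rightarrow> 'u \<Rightarrow> 'v \<Rightarrow> 'x) \<Rightarrow> ('z \<Rightarrow> 'u \<Rightarrow> 'y \<Rightarrow> 'y \<Rightarrow> 'z) \<Rightarrow> ('x \<Rightarrow> 'y) \<Rightarrow> ('x \<Rightarrow> 'x \<Rightarrow>\<^sub>L 'y)
   \<Rightarrow> ('z \<Rightarrow> 'x) \<Rightarrow> ('y \<Rightarrow> 'n) \<Rightarrow> ('n \<Rightarrow> real \<Rightarrow> real) \<Rightarrow> ('n \<Rightarrow> real) \<Rightarrow> ('n \<Rightarrow> real \<Rightarrow> real)
   \<Rightarrow> ('x::euclidean_space, 'z::euclidean_space, 'y::euclidean_space, 'n::finite) hstate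
   \<Rightarrow> 'u \<times> 'v \<Rightarrow> ('x, 'z, 'y, 'n) hstate" where
  "H_F fp fo h Dh \<psi> node \<alpha>s c \<gamma> = (\<lambda>(x, z, e, \<eta>) (u, v).
     (fp x u v,
      fo z u (h x + e) (h (\<psi> z)),
      - blinfun_apply (Dh x) (fp x u v),
      \<chi> i. - \<alpha>s i (\<eta> $ i) + c i * \<gamma> i (norm (node_part node i e))))"

definition H_C ::
  "('y::euclidean_space \<Rightarrow> 'n) \<Rightarrow> ('n \<Rightarrow> real \<Rightarrow> real) \<Rightarrow> ('n \<Rightarrow> real) \<Rightarrow> ('n \<Rightarrow> real)
   \<Rightarrow> ('n \<Rightarrow> real \<Rightarrow> real) \<Rightarrow> ('x::euclidean_space, 'z::euclidean_space, 'y, 'n::finite) hstate set" where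
  "H_C node \<alpha>s \<sigma> \<epsilon> \<gamma> = {(x, z, e, \<eta>). (x, z, e, \<eta>) \<in> H_Q \<and>
     (\<forall>i. \<gamma> i (norm (node_part node i e)) \<le> \<sigma> i * \<alpha>s i (\<eta> $ i) + \<epsilon> i)}"

definition H_Di ::
  "('y::euclidean_space \<Rightarrow> 'n) \<Rightarrow> ('n \<Rightarrow> real \<Rightarrow> real) \<Rightarrow> ('n \<Rightarrow> real) \<Rightarrow> ('n \<Rightarrow> real)
   \<Rightarrow> ('n \<Rightarrow> real \<Rightarrow> real) \<Rightarrow> 'n \<Rightarrow> ('x::euclidean_space, 'z::euclidean_space, 'y, 'n::finite) hstate set" where
  "H_Di node \<alpha>s \<sigma> \<epsilon> \<gamma> i = {(x, z, e, \<eta>). (x, z, e, \<eta>) \<in> H_Q \<and>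
     \<gamma> i (norm (node_part node i e)) \<ge> \<sigma> i * \<alpha>s i (\<eta> $ i) + \<epsilon> i}"

definition H_D ::
  "('y::euclidean_space \<Rightarrow> 'n) \<Rightarrow> ('n \<Rightarrow> real \<Rightarrow> real) \<Rightarrow> ('n \<Rightarrow> real) \<Rightarrow> ('n \<Rightarrow> real)
   \<Rightarrow> ('n \<Rightarrow> real \<Rightarrow> real) \<Rightarrow> ('x::euclidean_space, 'z::euclidean_space, 'y, 'n::finite) hstate set" where
  "H_D node \<alpha>s \<sigma> \<epsilon> \<gamma> = (\<Union>i. H_Di node \<alpha>s \<sigma> \<epsilon> \<gamma> i)"

definition H_G ::
  "('y::euclidean_space \<Rightarrow> 'n) \<Rightarrow> ('n \<Rightarrow> real \<Rightarrow> real) \<Rightarrow> ('n \<Rightarrow> real) \<Rightarrow> ('n \<Rightarrow> real)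
   \<Rightarrow> ('n \<Rightarrow> real \<Rightarrow> real) \<Rightarrow> ('n \<Rightarrow> real)
   \<Rightarrow> ('x::euclidean_space, 'z::euclidean_space, 'y, 'n::finite) hstate
   \<Rightarrow> ('x, 'z, 'y, 'n) hstate set" where
  "H_G node \<alpha>s \<sigma> \<epsilon> \<gamma> b q = (\<Union>i. if q \<in> H_Di node \<alpha>s \<sigma> \<epsilon> \<gamma> i then
     (case q of (x, z, e, \<eta>) \<Rightarrow> {(x, z, e - node_part node i e, \<chi> k. if k = i then b i * \<eta> $ i else \<eta> $ k)})
     else {})"

end

theory Submission
  imports Defs
begin

lemma meas_Icc: "l \<le> r \<Longrightarrow> measure lebesgue {l..(r::real)} = r - l"
  by simp

lemma tdiv_interval:
  assumes "p tagged_division_of {a..b::real}" "(x, K) \<in> p"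
  shows "\<exists>l r. K = {l..r} \<and> l \<le> x \<and> x \<le> r \<and> a \<le> l \<and> r \<le> b \<and> Inf K = l \<and> Sup K = r"
proof -
  from tagged_division_ofD(4)[OF assms] obtain l r where K: "K = cbox l r" by blast
  have xK: "x \<in> K" using tagged_division_ofD(2)[OF assms] .
  have Ksub: "K \<subseteq> {a..b}" using tagged_division_ofD(3)[OF assms] .
  have lr: "l \<le> r" using xK K by auto
  have "a \<le> l" "r \<le> b" using Ksub K lr by auto
  then show ?thesis using K xK lr by (intro exI[of _ l] exI[of _ r]) auto
qed

lemma disj_intervals:
  fixes l1 r1 l2 r2 :: real
  assumes "l1 < r1" "l2 < r2" "interior {l1..r1} \<inter> interior {l2..r2} = {}"
  shows "r1 \<le> l2 \<or> r2 \<le> l1"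
proof (rule ccontr)
  assume "\<not> ?thesis"
  then have "r1 > l2" "r2 > l1" by auto
  define m where "m = (max l1 l2 + min r1 r2) / 2"
  have "m \<in> {l1<..<r1}" "m \<in> {l2<..<r2}" using assms \<open>r1 > l2\<close> \<open>r2 > l1\<close>
    unfolding m_def by auto
  then show False using assms(3) by auto
qed

lemma tdiv_disj:
  assumes p: "p tagged_division_of {a..b::real}" and "(x1, K1) \<in> p" "(x2, K2) \<in> p" "(x1, K1) \<noteq> (x2, K2)"
    and "Inf K1 < Sup K1" "Inf K2 < Sup K2"
  shows "Sup K1 \<le> Inf K2 \<or> Sup K2 \<le> Inf K1"
proof -
  obtain l1 r1 where 1: "K1 = {l1..r1}" "Inf K1 = l1" "Sup K1 = r1" using tdiv_interval[OF p assms(2)] by blast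
  obtain l2 r2 where 2: "K2 = {l2..r2}" "Inf K2 = l2" "Sup K2 = r2" using tdiv_interval[OF p assms(3)] by blast
  have "interior K1 \<inter> interior K2 = {}" using tagged_division_ofD(5)[OF p assms(2-4)] .
  then show ?thesis using disj_intervals[of l1 r1 l2 r2] 1 2 assms(5,6) by auto
qed

lemma CL:
  fixes g :: "real \<Rightarrow> real" and q :: "real \<Rightarrow> 'a::real_normed_vector"
  assumes ab: "a \<le> b" and ac: "abs_continuous_on q a b" and L: "L > 0"
    and lip: "\<And>s t. s \<in> {a..b} \<Longrightarrow> t \<in> {a..b} \<Longrightarrow> \<bar>g s - g t\<bar> \<le> L * norm (q s - q t) + L * \<bar>s - t\<bar>"
    and der: "AE t in lebesgue. t \<in> {a..b} \<longrightarrow> (\<exists>D. (g has_real_derivative D) (at t within {a..b}) \<and> D \<le> 0)"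
  shows "g b \<le> g a"
proof (rule field_le_epsilon)
  fix \<eta> :: real assume \<eta>: "0 < \<eta>"
  have e4: "\<eta>/(4*L) > 0" using \<eta> L by simp
  have "\<exists>\<delta>>0. \<forall>(n::nat) (l::nat\<Rightarrow>real) (r::nat\<Rightarrow>real). (\<forall>k<n. a \<le> l k \<and> l k \<le> r k \<and> r k \<le> b)
        \<and> (\<forall>k<n. \<forall>k'<n. k \<noteq> k' \<longrightarrow> r k \<le> l k' \<or> r k' \<le> l k)
        \<and> (\<Sum>k<n. r k - l k) < \<delta>
        \<longrightarrow> (\<Sum>k<n. norm (q (r k) - q (l k))) < \<eta>/(4*L)"
    using ac[unfolded abs_continuous_on_def, rule_format, OF e4] .
  then obtain \<delta> where \<delta>: "\<delta> > 0" and H: "\<forall>(n::nat) (l::nat\<Rightarrow>real) (r::nat\<Rightarrow>real). (\<forall>k<n. a \<le> l k \<and> l k \<le> r k \<and> r k \<le> b)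
        \<and> (\<forall>k<n. \<forall>k'<n. k \<noteq> k' \<longrightarrow> r k \<le> l k' \<or> r k' \<le> l k)
        \<and> (\<Sum>k<n. r k - l k) < \<delta>
        \<longrightarrow> (\<Sum>k<n. norm (q (r k) - q (l k))) < \<eta>/(4*L)" by (elim exE conjE)
  have ac\<delta>: "\<And>(n::nat) l r. (\<forall>k<n. a \<le> l k \<and> l k \<le> r k \<and> r k \<le> b) \<Longrightarrow>
      (\<forall>k<n. \<forall>k'<n. k \<noteq> k' \<longrightarrow> r k \<le> l k' \<or> r k' \<le> l k) \<Longrightarrow> (\<Sum>k<n. r k - l k) < \<delta> \<Longrightarrow>
      (\<Sum>k<n. norm (q (r k) - q (l k))) < \<eta>/(4*L)"
  proof -
    fix n :: nat and l r :: "nat \<Rightarrow> real"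
    assume "(\<forall>k<n. a \<le> l k \<and> l k \<le> r k \<and> r k \<le> b)" "(\<forall>k<n. \<forall>k'<n. k \<noteq> k' \<longrightarrow> r k \<le> l k' \<or> r k' \<le> l k)" "(\<Sum>k<n. r k - l k) < \<delta>"
    then show "(\<Sum>k<n. norm (q (r k) - q (l k))) < \<eta>/(4*L)" using spec[OF spec[OF spec[OF H, of n], of l], of r] by blast
  qed
  define \<delta>' where "\<delta>' = min \<delta> (\<eta>/(4*L))"
  have \<delta>'pos: "\<delta>' > 0" using \<delta> e4 by (simp add: \<delta>'_def)
  define \<epsilon>1 where "\<epsilon>1 = \<eta> / (4*(b - a + 1))"
  have \<epsilon>1: "\<epsilon>1 > 0" using \<eta> ab by (simp add: \<epsilon>1_def)
  from der obtain N where N: "{t \<in> space lebesgue. \<not> (t \<in> {a..b} \<longrightarrow> (\<exists>D. (g has_real_derivative D) (at t within {a..b}) \<and> D \<le> 0))} \<subseteq> N"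
     "emeasure lebesgue N = 0" "N \<in> sets lebesgue" by (rule AE_E)
  have Nnull: "N \<in> null_sets lebesgue" using N by (simp add: null_sets_def)
  obtain U where U: "open U" "N \<subseteq> U" "(U - N) \<in> lmeasurable" "emeasure lebesgue (U - N) < ennreal \<delta>'"
    using sets_lebesgue_outer_open[OF N(3) \<delta>'pos] by blast
  have UN: "U = (U - N) \<union> N" using U(2) by blast
  have Umeas: "U \<in> lmeasurable" using UN U(3) fmeasurableI_null_sets[OF Nnull] fmeasurable.Un by metis
  have "measure lebesgue U = measure lebesgue (U - N)"
    using measure_Un_null_set[of "U - N" lebesgue N] Nnull U(3) UN by (metis fmeasurableD)
  moreover have "measure lebesgue (U - N) < \<delta>'"
    using U(3,4) \<delta>'pos by (simp add: emeasure_eq_measure2 ennreal_less_iff)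
  ultimately have Umeasure: "measure lebesgue U < \<delta>'" by simp
  have "\<forall>t. \<exists>r>0. (t \<in> N \<longrightarrow> ball t r \<subseteq> U) \<and> (t \<notin> N \<longrightarrow> t \<in> {a..b} \<longrightarrow>
          (\<forall>s\<in>{a..b}. \<bar>s - t\<bar> < r \<longrightarrow> (t \<le> s \<longrightarrow> g s - g t \<le> \<epsilon>1 * (s - t)) \<and> (s \<le> t \<longrightarrow> g t - g s \<le> \<epsilon>1 * (t - s))))"
  proof
    fix t
    show "\<exists>r>0. (t \<in> N \<longrightarrow> ball t r \<subseteq> U) \<and> (t \<notin> N \<longrightarrow> t \<in> {a..b} \<longrightarrow>
          (\<forall>s\<in>{a..b}. \<bar>s - t\<bar> < r \<longrightarrow> (t \<le> s \<longrightarrow> g s - g t \<le> \<epsilon>1 * (s - t)) \<and> (s \<le> t \<longrightarrow> g t - g s \<le> \<epsilon>1 * (t - s))))"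
    proof (cases "t \<in> N")
      case True
      then have "t \<in> U" using U(2) by blast
      then obtain r where "r > 0" "ball t r \<subseteq> U" using U(1) open_contains_ball by blast
      then show ?thesis using True by blast
    next
      case tN: False
      show ?thesis
      proof (cases "t \<in> {a..b}")
        case False
        then show ?thesis using tN by (intro exI[of _ 1]) auto
      next
        case tin: True
        then obtain D where D: "(g has_real_derivative D) (at t within {a..b})" "D \<le> 0"
          using N(1) tN by auto
        have "(g has_derivative (\<lambda>x. D * x)) (at t within {a..b})"
          using D(1) by (simp add: has_field_derivative_def)
        then obtain d where d: "d > 0" and dd: "\<And>y. y \<in> {a..b} \<Longrightarrow> norm (y - t) < d \<Longrightarrow>
             norm (g y - g t - D * (y - t)) \<le> \<epsilon>1 * norm (y - t)"
          using \<epsilon>1 unfolding has_derivative_within_alt by blast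
        have "(\<forall>s\<in>{a..b}. \<bar>s - t\<bar> < d \<longrightarrow> (t \<le> s \<longrightarrow> g s - g t \<le> \<epsilon>1 * (s - t)) \<and> (s \<le> t \<longrightarrow> g t - g s \<le> \<epsilon>1 * (t - s)))"
        proof (intro ballI impI conjI)
          fix s assume s: "s \<in> {a..b}" "\<bar>s - t\<bar> < d"
          have 1: "\<bar>g s - g t - D * (s - t)\<bar> \<le> \<epsilon>1 * \<bar>s - t\<bar>" using dd[OF s(1)] s(2) by simp
          { assume "t \<le> s"
            then have "D * (s - t) \<le> 0" using D(2) by (simp add: mult_nonpos_nonneg)
            then show "g s - g t \<le> \<epsilon>1 * (s - t)" using 1 \<open>t \<le> s\<close> by (simp add: abs_le_iff) }
          { assume "s \<le> t"
            then have "D * (t - s) \<le> 0" using D(2) by (simp add: mult_nonpos_nonneg)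
            then show "g t - g s \<le> \<epsilon>1 * (t - s)" using 1 \<open>s \<le> t\<close> by (simp add: abs_le_iff algebra_simps) }
        qed
        then show ?thesis using d tN by blast
      qed
    qed
  qed
  then have "\<exists>R. \<forall>t. 0 < R t \<and> (t \<in> N \<longrightarrow> ball t (R t) \<subseteq> U) \<and> (t \<notin> N \<longrightarrow> t \<in> {a..b} \<longrightarrow>
          (\<forall>s\<in>{a..b}. \<bar>s - t\<bar> < R t \<longrightarrow> (t \<le> s \<longrightarrow> g s - g t \<le> \<epsilon>1 * (s - t)) \<and> (s \<le> t \<longrightarrow> g t - g s \<le> \<epsilon>1 * (t - s))))"
    by (rule choice)
  then obtain R where R0: "\<forall>t. 0 < R t \<and> (t \<in> N \<longrightarrow> ball t (R t) \<subseteq> U) \<and> (t \<notin> N \<longrightarrow> t \<in> {a..b} \<longrightarrow>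
          (\<forall>s\<in>{a..b}. \<bar>s - t\<bar> < R t \<longrightarrow> (t \<le> s \<longrightarrow> g s - g t \<le> \<epsilon>1 * (s - t)) \<and> (s \<le> t \<longrightarrow> g t - g s \<le> \<epsilon>1 * (t - s))))"
    by blast
  have R: "\<And>t. R t > 0" "\<And>t. t \<in> N \<Longrightarrow> ball t (R t) \<subseteq> U"
    "\<And>t s. t \<notin> N \<Longrightarrow> t \<in> {a..b} \<Longrightarrow> s \<in> {a..b} \<Longrightarrow> \<bar>s - t\<bar> < R t \<Longrightarrow> t \<le> s \<Longrightarrow> g s - g t \<le> \<epsilon>1 * (s - t)"
    "\<And>t s. t \<notin> N \<Longrightarrow> t \<in> {a..b} \<Longrightarrow> s \<in> {a..b} \<Longrightarrow> \<bar>s - t\<bar> < R t \<Longrightarrow> s \<le> t \<Longrightarrow> g t - g s \<le> \<epsilon>1 * (t - s)"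
    using R0 by blast+
  have "gauge (\<lambda>t. ball t (R t))" by (rule gauge_ball_dependent) (use R(1) in auto)
  then obtain p where p: "p tagged_division_of cbox a b" "(\<lambda>t. ball t (R t)) fine p" by (rule fine_division_exists)
  have p': "p tagged_division_of {a..b}" using p(1) by simp
  have fin: "finite p" using p' by blast
  have fine: "\<And>x K. (x,K) \<in> p \<Longrightarrow> K \<subseteq> ball x (R x)" using p(2) by (auto simp: fine_def)
  define F where "F = (\<lambda>xK::real \<times> real set. g (Sup (snd xK)) - g (Inf (snd xK)))"
  define C where "C = (\<lambda>xK::real \<times> real set. Sup (snd xK) - Inf (snd xK))"
  have tele: "g b - g a = sum F p" using additive_tagged_division_1[OF ab p', of g] by (simp add: F_def split_def)
  have tele_id: "sum C p = b - a" using additive_tagged_division_1[OF ab p', of "\<lambda>x. x"] by (simp add: C_def split_def)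
  have Cnn: "\<And>xK. xK \<in> p \<Longrightarrow> C xK \<ge> 0"
  proof -
    fix xK assume "xK \<in> p"
    then obtain x K where "xK = (x, K)" "(x,K) \<in> p" by (cases xK) auto
    then show "C xK \<ge> 0" using tdiv_interval[OF p'] unfolding C_def by fastforce
  qed
  define pN where "pN = {xK \<in> p. fst xK \<in> N}"
  define pG where "pG = {xK \<in> p. fst xK \<notin> N}"
  have split: "sum F p = sum F pN + sum F pG"
  proof -
    have "p = pN \<union> pG" "pN \<inter> pG = {}" by (auto simp: pN_def pG_def)
    moreover have "finite pN" "finite pG" using fin by (auto simp: pN_def pG_def)
    ultimately show ?thesis by (metis sum.union_disjoint)
  qed
  have G_bound: "sum F pG \<le> \<eta>/4"
  proof -
    have "sum F pG \<le> sum (\<lambda>xK. \<epsilon>1 * C xK) pG"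
    proof (rule sum_mono)
      fix xK assume xK: "xK \<in> pG"
      then obtain x K where xK': "xK = (x, K)" "(x,K) \<in> p" "x \<notin> N" by (cases xK) (auto simp: pG_def)
      then obtain l r where lr: "K = {l..r}" "l \<le> x" "x \<le> r" "a \<le> l" "r \<le> b" "Inf K = l" "Sup K = r"
        using tdiv_interval[OF p'] by metis
      have sub: "K \<subseteq> ball x (R x)" using fine[OF xK'(2)] .
      have "r \<in> K" "l \<in> K" using lr by auto
      then have "\<bar>r - x\<bar> < R x" "\<bar>l - x\<bar> < R x" using sub by (auto simp: dist_real_def abs_minus_commute)
      then have "g r - g x \<le> \<epsilon>1 * (r - x)" "g x - g l \<le> \<epsilon>1 * (x - l)"
        using R(3)[of x r] R(4)[of x l] xK'(3) lr by auto
      then show "F xK \<le> \<epsilon>1 * C xK" using lr xK'(1) by (simp add: F_def C_def algebra_simps)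
    qed
    also have "\<dots> = \<epsilon>1 * sum C pG" by (simp add: sum_distrib_left)
    also have "\<dots> \<le> \<epsilon>1 * sum C p"
      using \<epsilon>1 Cnn fin by (intro mult_left_mono sum_mono2) (auto simp: pG_def)
    also have "\<dots> = \<epsilon>1 * (b - a)" using tele_id by simp
    also have "\<dots> \<le> \<eta>/4"
    proof -
      have "\<epsilon>1 * (b - a) = \<eta> / 4 * ((b - a) / (b - a + 1))" by (simp add: \<epsilon>1_def)
      also have "\<dots> \<le> \<eta>/4 * 1" using ab \<eta> by (intro mult_left_mono) auto
      finally show ?thesis by simp
    qed
    finally show ?thesis .
  qed
  define pN' where "pN' = {xK \<in> pN. Inf (snd xK) < Sup (snd xK)}"
  have pN'sub: "pN' \<subseteq> p" by (auto simp: pN'_def pN_def)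
  have finN': "finite pN'" using fin pN'sub finite_subset by blast
  have ivl: "\<And>xK. xK \<in> p \<Longrightarrow> \<exists>l r. snd xK = {l..r} \<and> l \<le> fst xK \<and> fst xK \<le> r \<and> a \<le> l \<and> r \<le> b \<and> Inf (snd xK) = l \<and> Sup (snd xK) = r"
    using tdiv_interval[OF p'] by (metis prod.collapse)
  have ivlE: "\<And>xK thesis. xK \<in> p \<Longrightarrow> (\<And>l r. snd xK = {l..r} \<Longrightarrow> l \<le> r \<Longrightarrow> a \<le> l \<Longrightarrow> r \<le> b \<Longrightarrow>
      Inf (snd xK) = l \<Longrightarrow> Sup (snd xK) = r \<Longrightarrow> l \<le> fst xK \<Longrightarrow> fst xK \<le> r \<Longrightarrow> thesis) \<Longrightarrow> thesis"
  proof -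
    fix xK thesis assume a1: "xK \<in> p" and a2: "(\<And>l r. snd xK = {l..r} \<Longrightarrow> l \<le> r \<Longrightarrow> a \<le> l \<Longrightarrow> r \<le> b \<Longrightarrow>
      Inf (snd xK) = l \<Longrightarrow> Sup (snd xK) = r \<Longrightarrow> l \<le> fst xK \<Longrightarrow> fst xK \<le> r \<Longrightarrow> thesis)"
    from ivl[OF a1] obtain l r where "snd xK = {l..r} \<and> l \<le> fst xK \<and> fst xK \<le> r \<and> a \<le> l \<and> r \<le> b \<and> Inf (snd xK) = l \<and> Sup (snd xK) = r" by blast
    then show thesis using a2[of l r] by auto
  qed
  have FN: "sum F pN = sum F pN'"
  proof (rule sum.mono_neutral_right)
    show "finite pN" using fin by (auto simp: pN_def)
    show "pN' \<subseteq> pN" by (auto simp: pN'_def)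
    show "\<forall>i\<in>pN - pN'. F i = 0"
    proof
      fix xK assume "xK \<in> pN - pN'"
      then have "xK \<in> p" "\<not> Inf (snd xK) < Sup (snd xK)" by (auto simp: pN'_def pN_def)
      then have "Inf (snd xK) = Sup (snd xK)" by (elim ivlE) auto
      then show "F xK = 0" by (simp add: F_def)
    qed
  qed
  have S1: "sum C pN' < \<delta>'"
  proof -
    have "sum C pN' = (\<Sum>xK\<in>pN'. measure lebesgue (snd xK))"
    proof (rule sum.cong)
      fix xK assume "xK \<in> pN'"
      then have "xK \<in> p" using pN'sub by blast
      then show "C xK = measure lebesgue (snd xK)" by (rule ivlE) (simp add: C_def)
    qed simp
    also have "\<dots> = measure lebesgue (\<Union>(snd ` pN'))"
    proof (rule measure_negligible_finite_Union_image[symmetric])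
      show "finite pN'" by (rule finN')
      show "\<And>x. x \<in> pN' \<Longrightarrow> snd x \<in> lmeasurable"
      proof -
        fix x assume "x \<in> pN'"
        then have "x \<in> p" using pN'sub by blast
        then obtain l r where "snd x = {l..r}" by (rule ivlE) auto
        then show "snd x \<in> lmeasurable" by simp
      qed
      show "pairwise (\<lambda>x y. negligible (snd x \<inter> snd y)) pN'"
      proof (rule pairwiseI)
        fix x y assume xy: "x \<in> pN'" "y \<in> pN'" "x \<noteq> y"
        obtain x1 K1 where 1: "x = (x1, K1)" by (cases x)
        obtain x2 K2 where 2: "y = (x2, K2)" by (cases y)
        have in1: "(x1,K1) \<in> p" "Inf K1 < Sup K1" using xy 1 pN'sub by (auto simp: pN'_def)
        have in2: "(x2,K2) \<in> p" "Inf K2 < Sup K2" using xy 2 pN'sub by (auto simp: pN'_def)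
        have d: "Sup K1 \<le> Inf K2 \<or> Sup K2 \<le> Inf K1"
          using tdiv_disj[OF p' in1(1) in2(1) _ in1(2) in2(2)] xy 1 2 by auto
        have "x \<in> p" using in1 1 by simp
        then obtain l1 r1 where L1: "K1 = {l1..r1}" "Inf K1 = l1" "Sup K1 = r1" by (rule ivlE) (use 1 in auto)
        have "y \<in> p" using in2 2 by simp
        then obtain l2 r2 where L2: "K2 = {l2..r2}" "Inf K2 = l2" "Sup K2 = r2" by (rule ivlE) (use 2 in auto)
        have "K1 \<inter> K2 \<subseteq> {r1, r2}" using d L1 L2 by auto
        then show "negligible (snd x \<inter> snd y)" using 1 2
          by (auto intro: negligible_subset[OF negligible_finite[of "{r1, r2}"]])
      qed
    qed
    also have "\<dots> \<le> measure lebesgue U"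
    proof (rule measure_mono_fmeasurable)
      show "\<Union>(snd ` pN') \<subseteq> U"
      proof
        fix y assume "y \<in> \<Union>(snd ` pN')"
        then obtain x K where xK: "(x,K) \<in> pN'" "y \<in> K" by auto
        then have "x \<in> N" "(x,K) \<in> p" by (auto simp: pN'_def pN_def)
        then show "y \<in> U" using fine R(2) xK(2) by blast
      qed
      have "compact (\<Union>(snd ` pN'))"
      proof (intro compact_Union)
        show "finite (snd ` pN')" using finN' by simp
        fix K assume "K \<in> snd ` pN'"
        then obtain x where "x \<in> pN'" "K = snd x" by auto
        then have "x \<in> p" using pN'sub by blast
        then obtain l r where "K = {l..r}" by (rule ivlE) (use \<open>K = snd x\<close> in auto)
        then show "compact K" by simp
      qed
      then show "\<Union>(snd ` pN') \<in> sets lebesgue" using lmeasurable_compact fmeasurableD by blast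
      show "U \<in> fmeasurable lebesgue" by (rule Umeas)
    qed
    finally show ?thesis using Umeasure by simp
  qed
  have S2: "(\<Sum>xK\<in>pN'. norm (q (Sup (snd xK)) - q (Inf (snd xK)))) < \<eta>/(4*L)"
  proof -
    obtain h where h: "bij_betw h {0..<card pN'} pN'" using ex_bij_betw_nat_finite[OF finN'] by blast
    define n where "n = card pN'"
    define l where "l = (\<lambda>k. Inf (snd (h k)))"
    define r where "r = (\<lambda>k. Sup (snd (h k)))"
    have hin: "\<And>k. k < n \<Longrightarrow> h k \<in> pN'" using h by (auto simp: n_def bij_betw_def)
    have c1: "\<forall>k<n. a \<le> l k \<and> l k \<le> r k \<and> r k \<le> b"
    proof (intro allI impI)
      fix k assume "k < n"
      then have "h k \<in> p" using hin pN'sub by blast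
      then show "a \<le> l k \<and> l k \<le> r k \<and> r k \<le> b" by (rule ivlE) (auto simp: l_def r_def)
    qed
    have c2: "\<forall>k<n. \<forall>k'<n. k \<noteq> k' \<longrightarrow> r k \<le> l k' \<or> r k' \<le> l k"
    proof (intro allI impI)
      fix k k' assume kk: "k < n" "k' < n" "k \<noteq> k'"
      then have ne: "h k \<noteq> h k'" using h by (auto simp: n_def bij_betw_def inj_on_def)
      have a1: "h k \<in> pN'" "h k' \<in> pN'" using hin kk by auto
      obtain x1 K1 where 1: "h k = (x1, K1)" by (cases "h k")
      obtain x2 K2 where 2: "h k' = (x2, K2)" by (cases "h k'")
      have m1: "(x1, K1) \<in> p" "(x2, K2) \<in> p" using a1 pN'sub 1 2 by auto
      have m2: "Inf K1 < Sup K1" "Inf K2 < Sup K2" using a1 1 2 by (auto simp: pN'_def)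
      have "(x1, K1) \<noteq> (x2, K2)" using ne 1 2 by simp
      from tdiv_disj[OF p' m1 this m2] show "r k \<le> l k' \<or> r k' \<le> l k"
        using 1 2 by (simp add: l_def r_def)
    qed
    have reidx: "\<And>f. (\<Sum>k<n. f (h k)) = sum f pN'"
      using sum.reindex_bij_betw[OF h] by (simp add: n_def lessThan_atLeast0)
    have "(\<Sum>k<n. r k - l k) = sum C pN'" using reidx[of C] by (simp add: C_def l_def r_def)
    also have "\<dots> < \<delta>" using S1 by (simp add: \<delta>'_def)
    finally have "(\<Sum>k<n. norm (q (r k) - q (l k))) < \<eta>/(4*L)" using ac\<delta>[of n l r] c1 c2 by blast
    then show ?thesis using reidx[of "\<lambda>xK. norm (q (Sup (snd xK)) - q (Inf (snd xK)))"] by (simp add: l_def r_def)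
  qed
  have N_bound: "sum F pN \<le> \<eta>/2"
  proof -
    have "sum F pN' \<le> (\<Sum>xK\<in>pN'. L * norm (q (Sup (snd xK)) - q (Inf (snd xK))) + L * C xK)"
    proof (rule sum_mono)
      fix xK assume "xK \<in> pN'"
      then have "xK \<in> p" using pN'sub by blast
      then obtain l r where "Inf (snd xK) = l" "Sup (snd xK) = r" "a \<le> l" "l \<le> r" "r \<le> b" by (rule ivlE) auto
      then show "F xK \<le> L * norm (q (Sup (snd xK)) - q (Inf (snd xK))) + L * C xK"
        using lip[of r l] by (auto simp: F_def C_def)
    qed
    also have "\<dots> = L * (\<Sum>xK\<in>pN'. norm (q (Sup (snd xK)) - q (Inf (snd xK)))) + L * sum C pN'"
      by (simp add: sum.distrib sum_distrib_left)
    also have "\<dots> \<le> L * (\<eta>/(4*L)) + L * (\<eta>/(4*L))"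
      using S1 S2 L by (intro add_mono mult_left_mono) (auto simp: \<delta>'_def)
    also have "\<dots> = \<eta>/2" using L by (simp add: field_simps)
    finally show ?thesis using FN by simp
  qed
  show "g b \<le> g a + \<eta>" using tele split G_bound N_bound \<eta> by linarith
qed

lemma ac_cont:
  assumes "abs_continuous_on q a b"
  shows "continuous_on {a..b} q"
  unfolding continuous_on_iff
proof (intro ballI allI impI)
  fix t and e :: real assume t: "t \<in> {a..b}" and e: "0 < e"
  obtain \<delta> where \<delta>: "\<delta>>0" and H: "\<forall>(n::nat) (l::nat\<Rightarrow>real) (r::nat\<Rightarrow>real). (\<forall>k<n. a \<le> l k \<and> l k \<le> r k \<and> r k \<le> b)
        \<and> (\<forall>k<n. \<forall>k'<n. k \<noteq> k' \<longrightarrow> r k \<le> l k' \<or> r k' \<le> l k)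
        \<and> (\<Sum>k<n. r k - l k) < \<delta>
        \<longrightarrow> (\<Sum>k<n. norm (q (r k) - q (l k))) < e"
    using assms[unfolded abs_continuous_on_def, rule_format, OF e] by (elim exE conjE)
  show "\<exists>d>0. \<forall>x'\<in>{a..b}. dist x' t < d \<longrightarrow> dist (q x') (q t) < e"
  proof (intro exI[of _ \<delta>] conjI ballI impI)
    fix s assume s: "s \<in> {a..b}" "dist s t < \<delta>"
    have "(\<Sum>k<(1::nat). norm (q ((\<lambda>_. max s t) k) - q ((\<lambda>_. min s t) k))) < e"
      using spec[OF spec[OF spec[OF H, of 1], of "\<lambda>_. min s t"], of "\<lambda>_. max s t"] s t \<delta>
      by (auto simp: dist_real_def)
    then show "dist (q s) (q t) < e" by (cases "s \<le> t") (auto simp: dist_norm norm_minus_commute max_def min_def)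
  qed (rule \<delta>)
qed

lemma ess_sup_bound:
  fixes v :: "real \<Rightarrow> 'a::real_normed_vector"
  assumes "\<exists>M. AE s in lebesgue. s \<in> {t1..t2} \<longrightarrow> norm (v s) \<le> M"
  shows "AE s in lebesgue. s \<in> {t1..t2} \<longrightarrow> norm (v s) \<le> ess_sup_norm v t1 t2"
    and "0 \<le> ess_sup_norm v t1 t2"
proof -
  define S where "S = {M. 0 \<le> M \<and> (AE s in lebesgue. s \<in> {t1..t2} \<longrightarrow> norm (v s) \<le> M)}"
  have es: "ess_sup_norm v t1 t2 = Inf S" by (simp add: S_def ess_sup_norm_def)
  obtain M0 where M0: "AE s in lebesgue. s \<in> {t1..t2} \<longrightarrow> norm (v s) \<le> M0" using assms by blast
  have "max M0 0 \<in> S" unfolding S_def using M0 by (auto elim!: eventually_mono)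
  then have ne: "S \<noteq> {}" by blast
  have bdd: "bdd_below S" unfolding S_def by (rule bdd_belowI[of _ 0]) auto
  show nn: "0 \<le> ess_sup_norm v t1 t2" unfolding es by (rule cInf_greatest[OF ne]) (auto simp: S_def)
  have "\<forall>n::nat. \<exists>M\<in>S. M < Inf S + 1 / real (Suc n)"
  proof
    fix n :: nat
    have "Inf S < Inf S + 1 / real (Suc n)" by simp
    then show "\<exists>M\<in>S. M < Inf S + 1 / real (Suc n)" using cInf_less_iff[OF ne bdd] by blast
  qed
  then obtain Mn where Mn: "\<And>n. Mn n \<in> S" "\<And>n. Mn n < Inf S + 1 / real (Suc n)" by metis
  have "\<forall>n. AE s in lebesgue. s \<in> {t1..t2} \<longrightarrow> norm (v s) \<le> Mn n" using Mn(1) by (auto simp: S_def)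
  then have "AE s in lebesgue. \<forall>n. s \<in> {t1..t2} \<longrightarrow> norm (v s) \<le> Mn n" by (rule AE_all_countable[THEN iffD2])
  then show "AE s in lebesgue. s \<in> {t1..t2} \<longrightarrow> norm (v s) \<le> ess_sup_norm v t1 t2"
  proof (rule eventually_mono, intro impI)
    fix s assume H: "\<forall>n. s \<in> {t1..t2} \<longrightarrow> norm (v s) \<le> Mn n" and s: "s \<in> {t1..t2}"
    show "norm (v s) \<le> ess_sup_norm v t1 t2"
    proof (rule ccontr)
      assume "\<not> ?thesis"
      then have "0 < norm (v s) - Inf S" unfolding es by simp
      then obtain n where "inverse (real (Suc n)) < norm (v s) - Inf S" using reals_Archimedean by blast
      then have i: "1 / real (Suc n) < norm (v s) - Inf S" by (simp add: inverse_eq_divide)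
      have "norm (v s) \<le> Mn n" using H s by blast
      then show False using i Mn(2)[of n] by linarith
    qed
  qed
qed

lemma exp_diff_le:
  fixes x y c :: real
  assumes "x \<le> c" "y \<le> c"
  shows "\<bar>exp x - exp y\<bar> \<le> exp c * \<bar>x - y\<bar>"
proof -
  have key: "exp v - exp u \<le> exp c * (v - u)" if "u \<le> v" "v \<le> c" for u v :: real
  proof -
    have h: "1 - exp (u - v) \<le> v - u" using exp_ge_add_one_self[of "u - v"] by linarith
    have "exp v * (1 - exp (u - v)) \<le> exp v * (v - u)" by (rule mult_left_mono[OF h]) simp
    also have "exp v * (1 - exp (u - v)) = exp v - exp u" by (simp add: algebra_simps exp_diff)
    finally have "exp v - exp u \<le> exp v * (v - u)" .
    also have "\<dots> \<le> exp c * (v - u)" using that by (intro mult_right_mono) auto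
    finally show ?thesis .
  qed
  show ?thesis
  proof (cases "x \<le> y")
    case True
    then show ?thesis using key[of x y] assms by (simp add: abs_if)
  next
    case False
    then show ?thesis using key[of y x] assms by (simp add: abs_if)
  qed
qed

lemma exp_lip:
  fixes G :: "real \<Rightarrow> real" and q :: "real \<Rightarrow> 'a::real_normed_vector"
  assumes L1: "L1 \<ge> 0" and k: "k \<ge> 0" and M: "M \<ge> 0"
    and lipG: "\<And>s t. s \<in> {a..b} \<Longrightarrow> t \<in> {a..b} \<Longrightarrow> \<bar>G s - G t\<bar> \<le> L1 * norm (q s - q t)"
    and bndG: "\<And>s. s \<in> {a..b} \<Longrightarrow> \<bar>G s\<bar> \<le> M"
  shows "\<exists>L>0. \<forall>s\<in>{a..b}. \<forall>t\<in>{a..b}. \<bar>exp (k * s) * G s - exp (k * t) * G t\<bar> \<le> L * norm (q s - q t) + L * \<bar>s - t\<bar>"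
proof (intro exI[of _ "exp (k * b) * L1 + M * k * exp (k * b) + 1"] conjI ballI)
  have "0 \<le> exp (k * b) * L1" "0 \<le> M * k * exp (k * b)" using L1 k M by simp_all
  then show "0 < exp (k * b) * L1 + M * k * exp (k * b) + 1" by linarith
  fix s t assume s: "s \<in> {a..b}" and t: "t \<in> {a..b}"
  have e1: "exp (k * s) \<le> exp (k * b)" using s k by (simp add: mult_left_mono)
  have "\<bar>exp (k * s) - exp (k * t)\<bar> \<le> exp (k * b) * \<bar>k * s - k * t\<bar>"
    using s t k by (intro exp_diff_le) (auto simp: mult_left_mono)
  also have "\<dots> = k * exp (k * b) * \<bar>s - t\<bar>" using k by (simp add: abs_mult right_diff_distrib[symmetric])
  finally have e2: "\<bar>exp (k * s) - exp (k * t)\<bar> \<le> k * exp (k * b) * \<bar>s - t\<bar>" .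
  have "exp (k * s) * G s - exp (k * t) * G t = exp (k * s) * (G s - G t) + G t * (exp (k * s) - exp (k * t))"
    by (simp add: algebra_simps)
  then have "\<bar>exp (k * s) * G s - exp (k * t) * G t\<bar> \<le> exp (k * s) * \<bar>G s - G t\<bar> + \<bar>G t\<bar> * \<bar>exp (k * s) - exp (k * t)\<bar>"
    by (simp add: abs_mult) (metis abs_triangle_ineq abs_mult abs_exp_cancel)
  also have "\<dots> \<le> exp (k * b) * (L1 * norm (q s - q t)) + M * (k * exp (k * b) * \<bar>s - t\<bar>)"
    using lipG[OF s t] bndG[OF t] e1 e2 by (intro add_mono mult_mono) auto
  also have "\<dots> \<le> (exp (k * b) * L1 + M * k * exp (k * b) + 1) * norm (q s - q t) + (exp (k * b) * L1 + M * k * exp (k * b) + 1) * \<bar>s - t\<bar>"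
  proof -
    have c0: "0 \<le> M * k * exp (k * b)" "0 \<le> exp (k * b) * L1" using M k L1 by simp_all
    have A: "exp (k * b) * (L1 * norm (q s - q t)) \<le> (exp (k * b) * L1 + M * k * exp (k * b) + 1) * norm (q s - q t)"
      using mult_right_mono[of "exp (k * b) * L1" "exp (k * b) * L1 + M * k * exp (k * b) + 1" "norm (q s - q t)"] c0
      by (simp add: mult.assoc)
    have B: "M * (k * exp (k * b) * \<bar>s - t\<bar>) \<le> (exp (k * b) * L1 + M * k * exp (k * b) + 1) * \<bar>s - t\<bar>"
      using mult_right_mono[of "M * k * exp (k * b)" "exp (k * b) * L1 + M * k * exp (k * b) + 1" "\<bar>s - t\<bar>"] c0
      by (simp add: mult.assoc)
    show ?thesis using A B by simp
  qed
  finally show "\<bar>exp (k * s) * G s - exp (k * t) * G t\<bar> \<le> (exp (k * b) * L1 + M * k * exp (k * b) + 1) * norm (q s - q t) + (exp (k * b) * L1 + M * k * exp (k * b) + 1) * \<bar>s - t\<bar>" .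
qed

lemma norm_fst_le': "norm (fst p) \<le> norm p"
  using norm_fst_le[of "fst p" "snd p"] by simp

lemma norm_snd_le': "norm (snd p) \<le> norm p"
  using norm_snd_le[of "snd p" "fst p"] by simp

lemma norm_xz_le:
  fixes Q :: "'x::real_normed_vector \<times> 'z::real_normed_vector \<times> 'r::real_normed_vector"
  shows "norm (fst Q, fst (snd Q)) \<le> norm Q"
proof -
  have "norm (fst (snd Q)) \<le> norm (snd Q)" by (rule norm_fst_le')
  then have "(norm (fst (snd Q)))^2 \<le> (norm (snd Q))^2" by (simp add: power_mono)
  then have "sqrt ((norm (fst Q))\<^sup>2 + (norm (fst (snd Q)))\<^sup>2) \<le> sqrt ((norm (fst Q))\<^sup>2 + (norm (snd Q))\<^sup>2)"
    by simp
  then show ?thesis by (cases Q) (simp add: norm_Pair)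
qed

lemma eta_le:
  fixes Q :: "'x::real_normed_vector \<times> 'z::real_normed_vector \<times> 'y::real_normed_vector \<times> (real^'n)"
  shows "\<bar>snd (snd (snd Q)) $ i\<bar> \<le> norm Q"
proof -
  have "\<bar>snd (snd (snd Q)) $ i\<bar> \<le> norm (snd (snd (snd Q)))" by (rule component_le_norm_cart)
  also have "\<dots> \<le> norm (snd (snd Q))" by (rule norm_snd_le')
  also have "\<dots> \<le> norm (snd Q)" by (rule norm_snd_le')
  also have "\<dots> \<le> norm Q" by (rule norm_snd_le')
  finally show ?thesis .
qed

lemma V_lip:
  fixes Vf :: "'x::euclidean_space \<Rightarrow> 'z::euclidean_space \<Rightarrow> real" and DV :: "'x \<Rightarrow> 'z \<Rightarrow> ('x \<times> 'z) \<Rightarrow>\<^sub>L real"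
  assumes V_deriv: "\<And>x z. ((\<lambda>p. Vf (fst p) (snd p)) has_derivative blinfun_apply (DV x z)) (at (x, z))"
    and V_C1: "continuous_on UNIV (\<lambda>(x, z). DV x z)"
  shows "\<exists>B\<ge>0. \<forall>p1 p2. norm p1 \<le> R \<longrightarrow> norm p2 \<le> R \<longrightarrow>
      \<bar>Vf (fst p1) (snd p1) - Vf (fst p2) (snd p2)\<bar> \<le> B * norm (p1 - p2)"
proof -
  have cont: "continuous_on (cball 0 R) (\<lambda>p. DV (fst p) (snd p))"
    using continuous_on_subset[OF V_C1, of "cball 0 R"] by (simp add: split_def)
  have "compact ((\<lambda>p. DV (fst p) (snd p)) ` cball 0 R)" by (rule compact_continuous_image[OF cont compact_cball])
  then have "bounded ((\<lambda>p. DV (fst p) (snd p)) ` cball 0 R)" by (rule compact_imp_bounded)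
  then obtain B0 where B0: "\<forall>y\<in>(\<lambda>p. DV (fst p) (snd p)) ` cball 0 R. norm y \<le> B0"
    unfolding bounded_iff by blast
  define B where "B = max B0 0"
  have derf: "\<And>p. p \<in> cball 0 R \<Longrightarrow> ((\<lambda>p. Vf (fst p) (snd p)) has_derivative blinfun_apply (DV (fst p) (snd p))) (at p within cball 0 R)"
  proof -
    fix p :: "'x \<times> 'z"
    show "((\<lambda>p. Vf (fst p) (snd p)) has_derivative blinfun_apply (DV (fst p) (snd p))) (at p within cball 0 R)"
      using has_derivative_at_withinI[OF V_deriv[of "fst p" "snd p", unfolded prod.collapse]] .
  qed
  have bnd: "\<And>p. p \<in> cball 0 R \<Longrightarrow> onorm (blinfun_apply (DV (fst p) (snd p))) \<le> B"
  proof -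
    fix p :: "'x \<times> 'z" assume "p \<in> cball 0 R"
    then have "norm (DV (fst p) (snd p)) \<le> B0" using B0 by blast
    then have "norm (DV (fst p) (snd p)) \<le> B" unfolding B_def by (rule max.coboundedI1)
    then show "onorm (blinfun_apply (DV (fst p) (snd p))) \<le> B" by (simp add: norm_blinfun.rep_eq)
  qed
  show ?thesis
  proof (intro exI[of _ B] conjI allI impI)
    show "0 \<le> B" by (simp add: B_def)
    fix p1 p2 :: "'x \<times> 'z" assume "norm p1 \<le> R" "norm p2 \<le> R"
    then have "p1 \<in> cball 0 R" "p2 \<in> cball 0 R" by auto
    from differentiable_bound[OF convex_cball derf bnd this]
    show "\<bar>Vf (fst p1) (snd p1) - Vf (fst p2) (snd p2)\<bar> \<le> B * norm (p1 - p2)" by simp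
  qed
qed

lemma lin_sum_d: "linear (\<lambda>\<eta>::real^'n::finite. \<Sum>i\<in>UNIV. d i * \<eta> $ i)"
  by (auto simp: linear_iff sum.distrib sum_distrib_left algebra_simps)

lemma W_deriv:
  fixes Qf :: "real \<Rightarrow> 'x::euclidean_space \<times> 'z::euclidean_space \<times> 'y::euclidean_space \<times> (real^'n::finite)"
    and Vf :: "'x \<Rightarrow> 'z \<Rightarrow> real" and DV :: "'x \<Rightarrow> 'z \<Rightarrow> ('x \<times> 'z) \<Rightarrow>\<^sub>L real"
  assumes V_deriv: "\<And>x z. ((\<lambda>p. Vf (fst p) (snd p)) has_derivative blinfun_apply (DV x z)) (at (x, z))"
    and Qd: "(Qf has_vector_derivative Q') (at \<tau> within S)"
  shows "((\<lambda>s. exp (k * s) * (Vf (fst (Qf s)) (fst (snd (Qf s))) + (\<Sum>i\<in>UNIV. d i * snd (snd (snd (Qf s))) $ i) - Cc)) has_real_derivative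
     exp (k * \<tau>) * (k * (Vf (fst (Qf \<tau>)) (fst (snd (Qf \<tau>))) + (\<Sum>i\<in>UNIV. d i * snd (snd (snd (Qf \<tau>))) $ i) - Cc)
        + (DV (fst (Qf \<tau>)) (fst (snd (Qf \<tau>))) (fst Q', fst (snd Q')) + (\<Sum>i\<in>UNIV. d i * snd (snd (snd Q')) $ i)))) (at \<tau> within S)"
proof -
  define x where "x = fst (Qf \<tau>)"
  define z where "z = fst (snd (Qf \<tau>))"
  have Qd': "(Qf has_derivative (\<lambda>h. h *\<^sub>R Q')) (at \<tau> within S)" using Qd by (simp add: has_vector_derivative_def)
  have 1: "((\<lambda>s. (fst (Qf s), fst (snd (Qf s)))) has_derivative (\<lambda>h. (fst (h *\<^sub>R Q'), fst (snd (h *\<^sub>R Q'))))) (at \<tau> within S)"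
    by (rule has_derivative_Pair[OF has_derivative_fst[OF Qd'] has_derivative_fst[OF has_derivative_snd[OF Qd']]])
  have 2: "((\<lambda>s. Vf (fst (Qf s)) (fst (snd (Qf s)))) has_derivative (\<lambda>h. DV x z (fst (h *\<^sub>R Q'), fst (snd (h *\<^sub>R Q'))))) (at \<tau> within S)"
    using has_derivative_compose[OF 1, of "\<lambda>p. Vf (fst p) (snd p)" "blinfun_apply (DV x z)"] V_deriv[of x z]
    by (simp add: x_def z_def)
  have bl: "bounded_linear (\<lambda>\<eta>::real^'n. \<Sum>i\<in>UNIV. d i * \<eta> $ i)" using lin_sum_d linear_conv_bounded_linear by blast
  have 3: "((\<lambda>s. \<Sum>i\<in>UNIV. d i * snd (snd (snd (Qf s))) $ i) has_derivative (\<lambda>h. \<Sum>i\<in>UNIV. d i * snd (snd (snd (h *\<^sub>R Q'))) $ i)) (at \<tau> within S)"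
    using bounded_linear.has_derivative[OF bl has_derivative_snd[OF has_derivative_snd[OF has_derivative_snd[OF Qd']]]] .
  define D where "D = DV x z (fst Q', fst (snd Q')) + (\<Sum>i\<in>UNIV. d i * snd (snd (snd Q')) $ i)"
  have "((\<lambda>s. Vf (fst (Qf s)) (fst (snd (Qf s))) + (\<Sum>i\<in>UNIV. d i * snd (snd (snd (Qf s))) $ i)) has_derivative
      (\<lambda>h. DV x z (fst (h *\<^sub>R Q'), fst (snd (h *\<^sub>R Q'))) + (\<Sum>i\<in>UNIV. d i * snd (snd (snd (h *\<^sub>R Q'))) $ i))) (at \<tau> within S)"
    by (rule has_derivative_add[OF 2 3])
  moreover have "(\<lambda>h. DV x z (fst (h *\<^sub>R Q'), fst (snd (h *\<^sub>R Q'))) + (\<Sum>i\<in>UNIV. d i * snd (snd (snd (h *\<^sub>R Q'))) $ i)) = (*) D"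
  proof
    fix h :: real
    have e: "(fst (h *\<^sub>R Q'), fst (snd (h *\<^sub>R Q'))) = h *\<^sub>R (fst Q', fst (snd Q'))" by simp
    have "DV x z (fst (h *\<^sub>R Q'), fst (snd (h *\<^sub>R Q'))) = h * DV x z (fst Q', fst (snd Q'))"
      unfolding e blinfun.scaleR_right by simp
    moreover have "(\<Sum>i\<in>UNIV. d i * snd (snd (snd (h *\<^sub>R Q'))) $ i) = h * (\<Sum>i\<in>UNIV. d i * snd (snd (snd Q')) $ i)"
      by (simp add: sum_distrib_left algebra_simps)
    ultimately show "DV x z (fst (h *\<^sub>R Q'), fst (snd (h *\<^sub>R Q'))) + (\<Sum>i\<in>UNIV. d i * snd (snd (snd (h *\<^sub>R Q'))) $ i) = D * h"
      by (simp add: D_def algebra_simps)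
  qed
  ultimately have W': "((\<lambda>s. Vf (fst (Qf s)) (fst (snd (Qf s))) + (\<Sum>i\<in>UNIV. d i * snd (snd (snd (Qf s))) $ i)) has_real_derivative D) (at \<tau> within S)"
    by (simp add: has_field_derivative_def)
  have W'': "((\<lambda>s. Vf (fst (Qf s)) (fst (snd (Qf s))) + (\<Sum>i\<in>UNIV. d i * snd (snd (snd (Qf s))) $ i) - Cc) has_real_derivative D) (at \<tau> within S)"
    using DERIV_diff[OF W' DERIV_const[of Cc]] by simp
  have E: "((\<lambda>s. exp (k * s)) has_real_derivative exp (k * \<tau>) * k) (at \<tau> within S)"
    by (auto intro!: derivative_eq_intros)
  show ?thesis
    using DERIV_mult[OF E W''] by (rule DERIV_cong) (simp add: D_def x_def z_def algebra_simps)
qed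

lemma d_facts:
  fixes \<sigma>s cs aU as :: real
  assumes "0 < \<sigma>s" "0 \<le> cs" "\<sigma>s * cs < 1" "0 < aU" "0 < as" "as > aU / (1 - \<sigma>s * cs)"
  shows "0 < 1 - \<sigma>s * cs - aU / as"
    and "\<sigma>s / (1 - \<sigma>s * cs - aU / as) > \<sigma>s / (1 - \<sigma>s * cs)"
    and "\<sigma>s / (1 - \<sigma>s * cs - aU / as) > 0"
    and "\<sigma>s * (1 + (\<sigma>s / (1 - \<sigma>s * cs - aU / as)) * cs) = (\<sigma>s / (1 - \<sigma>s * cs - aU / as)) * (1 - aU / as)"
proof -
  have p1: "0 < 1 - \<sigma>s * cs" using assms by simp
  have "aU / (1 - \<sigma>s * cs) * (1 - \<sigma>s * cs) < as * (1 - \<sigma>s * cs)" using assms(6) p1 by (rule mult_strict_right_mono)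
  then have "aU < as * (1 - \<sigma>s * cs)" using p1 by simp
  then have "aU / as < 1 - \<sigma>s * cs" using assms(5) by (simp add: divide_less_eq mult.commute)
  then show p: "0 < 1 - \<sigma>s * cs - aU / as" by simp
  have "aU / as > 0" using assms by simp
  then have lt: "1 - \<sigma>s * cs - aU / as < 1 - \<sigma>s * cs" by simp
  show "\<sigma>s / (1 - \<sigma>s * cs - aU / as) > \<sigma>s / (1 - \<sigma>s * cs)"
    using divide_strict_left_mono[OF lt assms(1)] p p1 by simp
  show "\<sigma>s / (1 - \<sigma>s * cs - aU / as) > 0" using p assms(1) by simp
  show "\<sigma>s * (1 + (\<sigma>s / (1 - \<sigma>s * cs - aU / as)) * cs) = (\<sigma>s / (1 - \<sigma>s * cs - aU / as)) * (1 - aU / as)"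
    using p by (simp add: field_simps)
qed

lemma per_i:
  fixes \<sigma>s cs aU as d c \<sigma> ai \<eta> \<gamma> \<epsilon> \<epsilon>s vs :: real
  assumes "0 < \<sigma>s" "0 \<le> cs" "\<sigma>s * cs < 1" "0 < aU" "0 < as" "as > aU / (1 - \<sigma>s * cs)"
    and d: "d = \<sigma>s / (1 - \<sigma>s * cs - aU / as)"
    and c: "0 \<le> c" "c \<le> cs" and \<sigma>: "0 \<le> \<sigma>" "\<sigma> \<le> \<sigma>s" and ai: "ai \<ge> as" and \<eta>: "\<eta> \<ge> 0"
    and \<gamma>: "\<gamma> \<le> \<sigma> * (ai * \<eta>) + \<epsilon>" and \<epsilon>: "0 < \<epsilon>" "\<epsilon> \<le> \<epsilon>s" and vs: "d * cs \<le> vs"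
  shows "\<gamma> + d * (- (ai * \<eta>) + c * \<gamma>) \<le> - aU * (d * \<eta>) + (1 + vs) * \<epsilon>s"
proof -
  note df = d_facts[OF assms(1-6), folded d]
  have dpos: "d > 0" using df(3) .
  have dc: "d * c \<le> d * cs" using dpos c by (intro mult_left_mono) auto
  have dc0: "0 \<le> d * c" using dpos c by simp
  have A: "(1 + d * c) * \<gamma> \<le> (1 + d * c) * (\<sigma> * (ai * \<eta>) + \<epsilon>)" using dc0 \<gamma> by (intro mult_left_mono) auto
  have B: "(1 + d * c) * \<sigma> \<le> (1 + d * cs) * \<sigma>s" using dc \<sigma> dc0 by (intro mult_mono) auto
  have aipos: "ai > 0" using ai assms(5) by simp
  have "(1 + d * cs) * \<sigma>s * ai = (\<sigma>s * (1 + d * cs)) * ai" by (simp add: algebra_simps)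
  also have "\<dots> = d * (1 - aU / as) * ai" using df(4) by simp
  also have "\<dots> = d * ai - d * aU * (ai / as)" by (simp add: algebra_simps)
  finally have C1: "(1 + d * cs) * \<sigma>s * ai = d * ai - d * aU * (ai / as)" .
  have "ai / as \<ge> 1" using ai assms(5) by simp
  then have "d * aU * (ai / as) \<ge> d * aU * 1" using dpos assms(4) by (intro mult_left_mono) auto
  then have C: "(1 + d * cs) * \<sigma>s * ai \<le> d * ai - d * aU" using C1 by simp
  have "(1 + d * c) * \<sigma> * ai \<le> (1 + d * cs) * \<sigma>s * ai" using B aipos by (intro mult_right_mono) auto
  also have "\<dots> \<le> d * ai - d * aU" by (rule C)
  finally have E: "(1 + d * c) * \<sigma> * ai * \<eta> \<le> (d * ai - d * aU) * \<eta>" using \<eta> by (intro mult_right_mono) auto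
  have D: "(1 + d * c) * \<epsilon> \<le> (1 + vs) * \<epsilon>s" using dc vs \<epsilon> dc0 by (intro mult_mono) auto
  have "\<gamma> + d * (- (ai * \<eta>) + c * \<gamma>) = (1 + d * c) * \<gamma> - d * ai * \<eta>" by (simp add: algebra_simps)
  also have "\<dots> \<le> (1 + d * c) * (\<sigma> * (ai * \<eta>) + \<epsilon>) - d * ai * \<eta>" using A by simp
  also have "\<dots> = (1 + d * c) * \<sigma> * ai * \<eta> + (1 + d * c) * \<epsilon> - d * ai * \<eta>" by (simp add: algebra_simps)
  also have "\<dots> \<le> (d * ai - d * aU) * \<eta> + (1 + vs) * \<epsilon>s - d * ai * \<eta>" using E D by simp
  also have "\<dots> = - aU * (d * \<eta>) + (1 + vs) * \<epsilon>s" by (simp add: algebra_simps)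
  finally show ?thesis .
qed

theorem theorem2:
  fixes fp :: "'x::euclidean_space \<Rightarrow> 'u::euclidean_space \<Rightarrow> 'v::euclidean_space \<Rightarrow> 'x"
    and h :: "'x \<Rightarrow> 'y::euclidean_space"
    and Dh :: "'x \<Rightarrow> 'x \<Rightarrow>\<^sub>L 'y"
    and fo :: "'z::euclidean_space \<Rightarrow> 'u \<Rightarrow> 'y \<Rightarrow> 'y \<Rightarrow> 'z"
    and \<psi> :: "'z \<Rightarrow> 'x" and \<psi>R :: "'x \<Rightarrow> 'z"
    and node :: "'y \<Rightarrow> 'n::finite"
    and Uset :: "'u set" and Vset :: "'v set"
    and Vf :: "'x \<Rightarrow> 'z \<Rightarrow> real" and DV :: "'x \<Rightarrow> 'z \<Rightarrow> ('x \<times> 'z) \<Rightarrow>\<^sub>L real"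
    and \<alpha>lo \<alpha>up \<alpha> \<theta> :: "real \<Rightarrow> real" and \<gamma> :: "'n \<Rightarrow> real \<Rightarrow> real"
    and a aU \<mu> :: real
    and cstar \<sigma>star astar \<epsilon>star :: "'n \<Rightarrow> real"
    and c \<sigma> ai b \<epsilon> :: "'n \<Rightarrow> real" and \<alpha>s :: "'n \<Rightarrow> real \<Rightarrow> real"
    and d :: "'n \<Rightarrow> real" and vs :: real
  assumes fp_lip: "local_lipschitz (Uset \<times> Vset) UNIV (\<lambda>(u, v) x. fp x u v)"
    and fp_cont: "continuous_on (UNIV \<times> Uset \<times> Vset) (\<lambda>(x, u, v). fp x u v)"
    and h_deriv: "\<And>x. (h has_derivative blinfun_apply (Dh x)) (at x)"
    and h_C1: "continuous_on UNIV Dh"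
    and fo_cont: "continuous_on UNIV (\<lambda>(z, u, y, yh). fo z u y yh)"
    and dim_z: "DIM('x) \<le> DIM('z)"
    and \<psi>R: "\<And>x. \<psi> (\<psi>R x) = x"
    and nodes: "node ` Basis = UNIV"
    and K_lo: "Kinf \<alpha>lo" and K_up: "Kinf \<alpha>up" and K_\<alpha>: "Kinf \<alpha>"
    and K_\<gamma>: "\<And>i. Kinf (\<gamma> i)" and K_\<theta>: "Kinf \<theta>"
    and V_deriv: "\<And>x z. ((\<lambda>p. Vf (fst p) (snd p)) has_derivative blinfun_apply (DV x z)) (at (x, z))"
    and V_C1: "continuous_on UNIV (\<lambda>(x, z). DV x z)"
    and V_nonneg: "\<And>x z. 0 \<le> Vf x z"
    and V_sandwich: "\<And>x z. \<alpha>lo (norm (x - \<psi> z)) \<le> Vf x z \<and> Vf x z \<le> \<alpha>up (norm (\<psi>R x - z))"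
    and V_dissip: "\<And>x z u v e yh. u \<in> Uset \<Longrightarrow> v \<in> Vset \<Longrightarrow>
        blinfun_apply (DV x z) (fp x u v, fo z u (h x + e) yh)
          \<le> - \<alpha> (Vf x z) + (\<Sum>i\<in>UNIV. \<gamma> i (norm (node_part node i e))) + \<theta> (norm v)"
    and a_pos: "a > 0" and \<alpha>_lin: "\<And>s. s \<ge> 0 \<Longrightarrow> \<alpha> s = a * s"
    and aU: "0 < aU" "aU \<le> a" and \<mu>: "\<mu> > 0"
    and cstar: "\<And>i. 0 \<le> cstar i" and \<sigma>star: "\<And>i. 0 < \<sigma>star i"
    and \<sigma>c: "\<And>i. \<sigma>star i * cstar i < 1"
    and c_rng: "\<And>i. 0 \<le> c i \<and> c i \<le> cstar i"
    and \<sigma>_rng: "\<And>i. 0 \<le> \<sigma> i \<and> \<sigma> i \<le> \<sigma>star i"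
    and astar_pos: "\<And>i. 0 < astar i"
    and astar: "\<And>i. astar i > aU / (1 - \<sigma>star i * cstar i)"
    and ai: "\<And>i. ai i \<ge> astar i"
    and \<alpha>s_lin: "\<And>i s. s \<ge> 0 \<Longrightarrow> \<alpha>s i s = ai i * s"
    and b_rng: "\<And>i. 0 \<le> b i \<and> b i \<le> 1"
    and \<epsilon>_rng: "\<And>i. 0 < \<epsilon> i \<and> \<epsilon> i \<le> \<epsilon>star i"
    and d_def: "d \<equiv> (\<lambda>i. \<sigma>star i / (1 - \<sigma>star i * cstar i - aU / astar i))"
    and vs_def: "vs \<equiv> Max (range (\<lambda>i. d i * cstar i))"
    and \<epsilon>star_sum: "(\<Sum>i\<in>UNIV. \<epsilon>star i) \<le> aU * \<mu> / (1 + vs)"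
  shows "(\<forall>i. d i > \<sigma>star i / (1 - \<sigma>star i * cstar i))
    \<and> (\<forall>w E (q :: real \<times> nat \<Rightarrow> ('x, 'z, 'y, 'n) hstate).
         L_signal (Uset \<times> Vset) w \<longrightarrow>
         hybrid_solution H_Q (H_F fp fo h Dh \<psi> node \<alpha>s c \<gamma>) (H_C node \<alpha>s \<sigma> \<epsilon> \<gamma>)
            (H_D node \<alpha>s \<sigma> \<epsilon> \<gamma>) (H_G node \<alpha>s \<sigma> \<epsilon> \<gamma> b) w E q \<longrightarrow>
         (\<forall>(t, j)\<in>E.
            Vf (fst (q (t, j))) (fst (snd (q (t, j))))
              + (\<Sum>i\<in>UNIV. d i * (snd (snd (snd (q (t, j))))) $ i)
            \<le> exp (- aU * t) * (Vf (fst (q (0, 0))) (fst (snd (q (0, 0))))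
                   + (\<Sum>i\<in>UNIV. d i * (snd (snd (snd (q (0, 0))))) $ i))
              + \<mu> + \<theta> (ess_sup_norm (\<lambda>s. snd (w s)) 0 t) / aU))"
proof -
  have dfa: "\<And>i. 0 < 1 - \<sigma>star i * cstar i - aU / astar i \<and> d i > \<sigma>star i / (1 - \<sigma>star i * cstar i) \<and> d i > 0
      \<and> \<sigma>star i * (1 + d i * cstar i) = d i * (1 - aU / astar i)"
    using d_facts[OF \<sigma>star cstar \<sigma>c aU(1) astar_pos astar] unfolding d_def by blast
  have dpos: "\<And>i. d i > 0" using dfa by blast
  have finR: "finite (range (\<lambda>i. d i * cstar i))" by simp
  have vs_ge: "\<And>i. d i * cstar i \<le> vs" unfolding vs_def using finR by (intro Max_ge) auto
  have vs0: "0 \<le> vs" using vs_ge[of undefined] dpos[of undefined] cstar[of undefined] by (meson order_trans zero_le_mult_iff less_imp_le)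
  have sumeps: "(1 + vs) * (\<Sum>i\<in>UNIV. \<epsilon>star i) \<le> aU * \<mu>"
    using \<epsilon>star_sum vs0 by (simp add: le_divide_eq mult.commute)
  have \<theta>: "continuous_on {0..} \<theta>" "strict_mono_on {0..} \<theta>" "\<theta> 0 = 0" using K_\<theta> by (auto simp: Kinf_def)
  have \<theta>mono: "\<And>x y. 0 \<le> x \<Longrightarrow> x \<le> y \<Longrightarrow> \<theta> x \<le> \<theta> y" using strict_mono_on_leD[OF \<theta>(2)] by auto
  show ?thesis
  proof (intro conjI allI impI)
    fix i show "d i > \<sigma>star i / (1 - \<sigma>star i * cstar i)" using dfa by blast
  next
    fix w E and q :: "real \<times> nat \<Rightarrow> ('x, 'z, 'y, 'n) hstate"
    assume Lw: "L_signal (Uset \<times> Vset) w"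
      and sol: "hybrid_solution H_Q (H_F fp fo h Dh \<psi> node \<alpha>s c \<gamma>) (H_C node \<alpha>s \<sigma> \<epsilon> \<gamma>)
            (H_D node \<alpha>s \<sigma> \<epsilon> \<gamma>) (H_G node \<alpha>s \<sigma> \<epsilon> \<gamma> b) w E q"
    note S = sol[unfolded hybrid_solution_def hybrid_arc_def]
    note htd = S[THEN conjunct1, THEN conjunct1]
    have inQ: "\<And>p. p \<in> E \<Longrightarrow> q p \<in> H_Q" using S[THEN conjunct1, THEN conjunct2, THEN conjunct1] by blast
    note lac = S[THEN conjunct1, THEN conjunct2, THEN conjunct2, rule_format]
    note flow = S[THEN conjunct2, THEN conjunct1, rule_format]
    have jump: "\<And>t k. (t, k) \<in> E \<Longrightarrow> (t, Suc k) \<in> E \<Longrightarrow> q (t, k) \<in> H_D node \<alpha>s \<sigma> \<epsilon> \<gamma> \<and> q (t, Suc k) \<in> H_G node \<alpha>s \<sigma> \<epsilon> \<gamma> b (q (t, k))"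
      using S[THEN conjunct2, THEN conjunct2] by blast
    note Lw1 = Lw[unfolded L_signal_def, THEN conjunct2, THEN conjunct1, rule_format]
    note Lw2 = Lw[unfolded L_signal_def, THEN conjunct2, THEN conjunct2, rule_format]
    define Wf where "Wf = (\<lambda>Q::('x, 'z, 'y, 'n) hstate. Vf (fst Q) (fst (snd Q)) + (\<Sum>i\<in>UNIV. d i * snd (snd (snd Q)) $ i))"
    have main: "Wf (q (t, j)) \<le> exp (- aU * t) * Wf (q (0, 0)) + \<mu> + \<theta> (ess_sup_norm (\<lambda>s. snd (w s)) 0 t) / aU"
      if tj: "(t, j) \<in> E" for t j
    proof -
      define \<Theta> where "\<Theta> = \<theta> (ess_sup_norm (\<lambda>s. snd (w s)) 0 t)"
      define Cc where "Cc = \<mu> + \<Theta> / aU"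
      define \<phi> where "\<phi> = (\<lambda>s k. exp (aU * s) * (Wf (q (s, k)) - Cc))"
      have Epos: "E \<subseteq> {0..} \<times> UNIV" using htd unfolding hybrid_time_domain_def by blast
      have t0: "0 \<le> t" using Epos tj by auto
      obtain tt where tt0: "tt 0 = 0" and ttmono: "\<And>k. k \<le> j \<Longrightarrow> tt k \<le> tt (Suc k)"
        and Eeq: "E \<inter> ({0..t} \<times> {0..j}) = (\<Union>k\<in>{0..j}. {tt k..tt (Suc k)} \<times> {k})"
        using htd tj unfolding hybrid_time_domain_def by fastforce
      have seg: "(\<tau>, k) \<in> E \<and> 0 \<le> \<tau> \<and> \<tau> \<le> t" if "k \<le> j" "\<tau> \<in> {tt k..tt (Suc k)}" for k \<tau>
      proof -
        have "(\<tau>, k) \<in> (\<Union>k\<in>{0..j}. {tt k..tt (Suc k)} \<times> {k})" using that by auto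
        then have "(\<tau>, k) \<in> E \<inter> ({0..t} \<times> {0..j})" using Eeq by simp
        then show ?thesis by auto
      qed
      have tin: "t \<in> {tt j..tt (Suc j)}"
      proof -
        have "(t, j) \<in> E \<inter> ({0..t} \<times> {0..j})" using tj t0 by auto
        then show ?thesis using Eeq by auto
      qed
      obtain Mw where Mw: "AE s in lebesgue. s \<in> {0..t} \<longrightarrow> norm (w s) \<le> Mw" using Lw2[OF t0] by blast
      have "AE s in lebesgue. s \<in> {0..t} \<longrightarrow> norm (snd (w s)) \<le> Mw"
        using Mw by (rule eventually_mono) (meson norm_snd_le' order_trans)
      then have exM: "\<exists>M. AE s in lebesgue. s \<in> {0..t} \<longrightarrow> norm (snd (w s)) \<le> M" by blast
      note ess = ess_sup_bound[OF exM]
      have \<Theta>0: "0 \<le> \<Theta>" unfolding \<Theta>_def using \<theta>mono[OF order_refl ess(2)] \<theta>(3) by simp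
      have Cc0: "0 \<le> Cc" unfolding Cc_def using \<Theta>0 \<mu> aU by simp
      have aUCc: "aU * Cc = aU * \<mu> + \<Theta>" unfolding Cc_def using aU by (simp add: field_simps)
      have flowstep: "\<phi> s k \<le> \<phi> (tt k) k" if k: "k \<le> j" and s: "s \<in> {tt k..tt (Suc k)}" for k s
      proof (cases "tt k < s")
        case False
        then have "s = tt k" using s by auto
        then show ?thesis by simp
      next
        case True
        let ?I = "flow_interval E k"
        have sub: "{tt k..s} \<subseteq> ?I" using seg[OF k] s by (auto simp: flow_interval_def)
        have ac: "abs_continuous_on (\<lambda>\<tau>. q (\<tau>, k)) (tt k) s" using lac[of k] sub unfolding loc_abs_continuous_on_def by blast
        have "{tt k<..<s} \<subseteq> interior ?I" using interior_mono[OF sub] by simp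
        moreover have "(tt k + s) / 2 \<in> {tt k<..<s}" using True by auto
        ultimately have int: "interior ?I \<noteq> {}" by blast
        note AEd = flow[OF int]
        have cont: "continuous_on {tt k..s} (\<lambda>\<tau>. q (\<tau>, k))" by (rule ac_cont[OF ac])
        have "compact ((\<lambda>\<tau>. q (\<tau>, k)) ` {tt k..s})" by (rule compact_continuous_image[OF cont compact_Icc])
        then have "bounded ((\<lambda>\<tau>. q (\<tau>, k)) ` {tt k..s})" by (rule compact_imp_bounded)
        then obtain R where R: "\<forall>y\<in>(\<lambda>\<tau>. q (\<tau>, k)) ` {tt k..s}. norm y \<le> R" unfolding bounded_iff by blast
        then have Rq: "\<And>\<tau>. \<tau> \<in> {tt k..s} \<Longrightarrow> norm (q (\<tau>, k)) \<le> R" by blast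
        obtain B where B0: "B \<ge> 0" and B: "\<forall>p1 p2. norm p1 \<le> R \<longrightarrow> norm p2 \<le> R \<longrightarrow>
            \<bar>Vf (fst p1) (snd p1) - Vf (fst p2) (snd p2)\<bar> \<le> B * norm (p1 - p2)"
          using V_lip[OF V_deriv V_C1, of R] by blast
        define LW where "LW = B + (\<Sum>i\<in>UNIV. \<bar>d i\<bar>)"
        have LW0: "LW \<ge> 0" unfolding LW_def using B0 by (simp add: sum_nonneg)
        have lipW: "\<bar>Wf Q1 - Wf Q2\<bar> \<le> LW * norm (Q1 - Q2)" if "norm Q1 \<le> R" "norm Q2 \<le> R" for Q1 Q2 :: "('x, 'z, 'y, 'n) hstate"
        proof -
          have n1: "norm (fst Q1, fst (snd Q1)) \<le> R" using norm_xz_le[of Q1] that by linarith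
          have n2: "norm (fst Q2, fst (snd Q2)) \<le> R" using norm_xz_le[of Q2] that by linarith
          have "(fst Q1, fst (snd Q1)) - (fst Q2, fst (snd Q2)) = (fst (Q1 - Q2), fst (snd (Q1 - Q2)))" by simp
          then have n3: "norm ((fst Q1, fst (snd Q1)) - (fst Q2, fst (snd Q2))) \<le> norm (Q1 - Q2)" using norm_xz_le[of "Q1 - Q2"] by simp
          have V1: "\<bar>Vf (fst Q1) (fst (snd Q1)) - Vf (fst Q2) (fst (snd Q2))\<bar> \<le> B * norm (Q1 - Q2)"
            using B[rule_format, OF n1 n2] mult_left_mono[OF n3 B0] by simp
          have "\<bar>(\<Sum>i\<in>UNIV. d i * snd (snd (snd Q1)) $ i) - (\<Sum>i\<in>UNIV. d i * snd (snd (snd Q2)) $ i)\<bar>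
              = \<bar>\<Sum>i\<in>UNIV. d i * snd (snd (snd (Q1 - Q2))) $ i\<bar>" by (simp add: sum_subtractf[symmetric] algebra_simps)
          also have "\<dots> \<le> (\<Sum>i\<in>UNIV. \<bar>d i * snd (snd (snd (Q1 - Q2))) $ i\<bar>)" by (rule sum_abs)
          also have "\<dots> \<le> (\<Sum>i\<in>UNIV. \<bar>d i\<bar> * norm (Q1 - Q2))"
          proof (intro sum_mono)
            fix i
            have "\<bar>snd (snd (snd (Q1 - Q2))) $ i\<bar> \<le> norm (Q1 - Q2)" by (rule eta_le)
            then show "\<bar>d i * snd (snd (snd (Q1 - Q2))) $ i\<bar> \<le> \<bar>d i\<bar> * norm (Q1 - Q2)"
              unfolding abs_mult by (rule mult_left_mono) simp
          qed
          also have "\<dots> = (\<Sum>i\<in>UNIV. \<bar>d i\<bar>) * norm (Q1 - Q2)" by (simp add: sum_distrib_right)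
          finally have S: "\<bar>(\<Sum>i\<in>UNIV. d i * snd (snd (snd Q1)) $ i) - (\<Sum>i\<in>UNIV. d i * snd (snd (snd Q2)) $ i)\<bar> \<le> (\<Sum>i\<in>UNIV. \<bar>d i\<bar>) * norm (Q1 - Q2)" .
          have "\<bar>Wf Q1 - Wf Q2\<bar> \<le> \<bar>Vf (fst Q1) (fst (snd Q1)) - Vf (fst Q2) (fst (snd Q2))\<bar>
              + \<bar>(\<Sum>i\<in>UNIV. d i * snd (snd (snd Q1)) $ i) - (\<Sum>i\<in>UNIV. d i * snd (snd (snd Q2)) $ i)\<bar>"
            unfolding Wf_def by linarith
          also have "\<dots> \<le> LW * norm (Q1 - Q2)" using V1 S unfolding LW_def by (simp add: distrib_right)
          finally show ?thesis .
        qed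
        define M where "M = \<bar>Wf (q (tt k, k)) - Cc\<bar> + LW * (2 * R)"
        have a1: "tt k \<in> {tt k..s}" using True by simp
        have R0: "0 \<le> R" using Rq[OF a1] norm_ge_zero order_trans by blast
        have M0: "M \<ge> 0" unfolding M_def using LW0 R0 by simp
        have bndG: "\<bar>Wf (q (\<tau>, k)) - Cc\<bar> \<le> M" if "\<tau> \<in> {tt k..s}" for \<tau>
        proof -
          have a1: "tt k \<in> {tt k..s}" using True by auto
          have "norm (q (\<tau>, k) - q (tt k, k)) \<le> norm (q (\<tau>, k)) + norm (q (tt k, k))" by (rule norm_triangle_ineq4)
          also have "\<dots> \<le> 2 * R" using Rq[OF that] Rq[OF a1] by simp
          finally have "LW * norm (q (\<tau>, k) - q (tt k, k)) \<le> LW * (2 * R)" using LW0 by (rule mult_left_mono)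
          moreover have "\<bar>Wf (q (\<tau>, k)) - Wf (q (tt k, k))\<bar> \<le> LW * norm (q (\<tau>, k) - q (tt k, k))"
            using lipW Rq[OF that] Rq[OF a1] by blast
          ultimately show ?thesis unfolding M_def by linarith
        qed
        have lipG: "\<bar>(Wf (q (s1, k)) - Cc) - (Wf (q (s2, k)) - Cc)\<bar> \<le> LW * norm (q (s1, k) - q (s2, k))"
          if "s1 \<in> {tt k..s}" "s2 \<in> {tt k..s}" for s1 s2
          using lipW[OF Rq[OF that(1)] Rq[OF that(2)]] by simp
        obtain L where L: "L > 0" and lipphi: "\<forall>s1\<in>{tt k..s}. \<forall>s2\<in>{tt k..s}.
            \<bar>exp (aU * s1) * (Wf (q (s1, k)) - Cc) - exp (aU * s2) * (Wf (q (s2, k)) - Cc)\<bar>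
              \<le> L * norm (q (s1, k) - q (s2, k)) + L * \<bar>s1 - s2\<bar>"
          using exp_lip[of LW aU M "tt k" s "\<lambda>\<tau>. Wf (q (\<tau>, k)) - Cc" "\<lambda>\<tau>. q (\<tau>, k)", OF LW0 _ M0 lipG bndG] aU(1) by auto
        have der: "AE \<tau> in lebesgue. \<tau> \<in> {tt k..s} \<longrightarrow> (\<exists>D. ((\<lambda>\<tau>. exp (aU * \<tau>) * (Wf (q (\<tau>, k)) - Cc)) has_real_derivative D) (at \<tau> within {tt k..s}) \<and> D \<le> 0)"
        proof (rule eventually_mono[OF eventually_conj[OF AEd ess(1)]], intro impI)
          fix \<tau> assume H: "(\<tau> \<in> ?I \<longrightarrow> ((\<lambda>s. q (s, k)) has_vector_derivative (H_F fp fo h Dh \<psi> node \<alpha>s c \<gamma>) (q (\<tau>, k)) (w \<tau>)) (at \<tau> within ?I)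
              \<and> q (\<tau>, k) \<in> H_C node \<alpha>s \<sigma> \<epsilon> \<gamma>) \<and> (\<tau> \<in> {0..t} \<longrightarrow> norm (snd (w \<tau>)) \<le> ess_sup_norm (\<lambda>s. snd (w s)) 0 t)"
            and \<tau>: "\<tau> \<in> {tt k..s}"
          have \<tau>I: "\<tau> \<in> ?I" using sub \<tau> by blast
          have \<tau>t: "\<tau> \<in> {0..t}" using seg[OF k, of \<tau>] \<tau> s by auto
          have Qd: "((\<lambda>s. q (s, k)) has_vector_derivative (H_F fp fo h Dh \<psi> node \<alpha>s c \<gamma>) (q (\<tau>, k)) (w \<tau>)) (at \<tau> within {tt k..s})"
            using has_vector_derivative_within_subset[OF _ sub] H \<tau>I by blast
          have inC: "q (\<tau>, k) \<in> H_C node \<alpha>s \<sigma> \<epsilon> \<gamma>" using H \<tau>I by blast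
          have vb: "norm (snd (w \<tau>)) \<le> ess_sup_norm (\<lambda>s. snd (w s)) 0 t" using H \<tau>t by blast
          obtain x z e \<eta> where qe: "q (\<tau>, k) = (x, z, e, \<eta>)" by (cases "q (\<tau>, k)") auto
          obtain u v where wuv: "w \<tau> = (u, v)" by (cases "w \<tau>") auto
          have uv: "u \<in> Uset" "v \<in> Vset" using Lw1[of \<tau>] \<tau>t wuv by auto
          have \<eta>0: "\<And>i. 0 \<le> \<eta> $ i" and Cb: "\<And>i. \<gamma> i (norm (node_part node i e)) \<le> \<sigma> i * \<alpha>s i (\<eta> $ i) + \<epsilon> i"
            using inC qe by (auto simp: H_C_def H_Q_def)
          define Q' where "Q' = H_F fp fo h Dh \<psi> node \<alpha>s c \<gamma> (q (\<tau>, k)) (w \<tau>)"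
          have Q'e: "fst Q' = fp x u v" "fst (snd Q') = fo z u (h x + e) (h (\<psi> z))"
              "\<And>i. snd (snd (snd Q')) $ i = - \<alpha>s i (\<eta> $ i) + c i * \<gamma> i (norm (node_part node i e))"
            unfolding Q'_def qe wuv H_F_def by simp_all
          have dd: "((\<lambda>s. exp (aU * s) * (Vf (fst (q (s, k))) (fst (snd (q (s, k)))) + (\<Sum>i\<in>UNIV. d i * snd (snd (snd (q (s, k)))) $ i) - Cc)) has_real_derivative
             exp (aU * \<tau>) * (aU * (Vf (fst (q (\<tau>, k))) (fst (snd (q (\<tau>, k)))) + (\<Sum>i\<in>UNIV. d i * snd (snd (snd (q (\<tau>, k)))) $ i) - Cc)
                + (DV (fst (q (\<tau>, k))) (fst (snd (q (\<tau>, k)))) (fst Q', fst (snd Q')) + (\<Sum>i\<in>UNIV. d i * snd (snd (snd Q')) $ i)))) (at \<tau> within {tt k..s})"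
            using W_deriv[OF V_deriv Qd, of aU d Cc] unfolding Q'_def .
          define Dv where "Dv = exp (aU * \<tau>) * (aU * (Vf x z + (\<Sum>i\<in>UNIV. d i * \<eta> $ i) - Cc)
                + (DV x z (fp x u v, fo z u (h x + e) (h (\<psi> z))) + (\<Sum>i\<in>UNIV. d i * (- \<alpha>s i (\<eta> $ i) + c i * \<gamma> i (norm (node_part node i e))))))"
          have dd': "((\<lambda>\<tau>. exp (aU * \<tau>) * (Wf (q (\<tau>, k)) - Cc)) has_real_derivative Dv) (at \<tau> within {tt k..s})"
            using dd unfolding Wf_def Dv_def qe Q'e by simp
          have diss: "DV x z (fp x u v, fo z u (h x + e) (h (\<psi> z))) \<le> - \<alpha> (Vf x z) + (\<Sum>i\<in>UNIV. \<gamma> i (norm (node_part node i e))) + \<theta> (norm v)"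
            by (rule V_dissip[OF uv])
          have \<alpha>V: "\<alpha> (Vf x z) = a * Vf x z" using \<alpha>_lin V_nonneg by blast
          have aV: "aU * Vf x z \<le> a * Vf x z" using aU(2) V_nonneg[of x z] by (rule mult_right_mono)
          have pi: "\<gamma> i (norm (node_part node i e)) + d i * (- \<alpha>s i (\<eta> $ i) + c i * \<gamma> i (norm (node_part node i e)))
              \<le> - aU * (d i * \<eta> $ i) + (1 + vs) * \<epsilon>star i" for i
          proof -
            have e1: "\<alpha>s i (\<eta> $ i) = ai i * \<eta> $ i" using \<alpha>s_lin \<eta>0 by blast
            show ?thesis unfolding e1
              by (rule per_i[OF \<sigma>star cstar \<sigma>c aU(1) astar_pos astar _ _ _ _ _ ai \<eta>0 _ _ _ vs_ge])
                 (use c_rng \<sigma>_rng \<epsilon>_rng Cb[of i] e1 in \<open>auto simp: d_def\<close>)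
          qed
          have sum_pi: "(\<Sum>i\<in>UNIV. \<gamma> i (norm (node_part node i e))) + (\<Sum>i\<in>UNIV. d i * (- \<alpha>s i (\<eta> $ i) + c i * \<gamma> i (norm (node_part node i e))))
              \<le> - aU * (\<Sum>i\<in>UNIV. d i * \<eta> $ i) + aU * \<mu>"
          proof -
            have "(\<Sum>i\<in>UNIV. \<gamma> i (norm (node_part node i e))) + (\<Sum>i\<in>UNIV. d i * (- \<alpha>s i (\<eta> $ i) + c i * \<gamma> i (norm (node_part node i e))))
                = (\<Sum>i\<in>UNIV. \<gamma> i (norm (node_part node i e)) + d i * (- \<alpha>s i (\<eta> $ i) + c i * \<gamma> i (norm (node_part node i e))))"
              by (simp add: sum.distrib)
            also have "\<dots> \<le> (\<Sum>i\<in>UNIV. - aU * (d i * \<eta> $ i) + (1 + vs) * \<epsilon>star i)" by (intro sum_mono pi)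
            also have "\<dots> = - aU * (\<Sum>i\<in>UNIV. d i * \<eta> $ i) + (1 + vs) * (\<Sum>i\<in>UNIV. \<epsilon>star i)"
              unfolding sum_distrib_left by (rule sum.distrib)
            also have "\<dots> \<le> - aU * (\<Sum>i\<in>UNIV. d i * \<eta> $ i) + aU * \<mu>" using sumeps by simp
            finally show ?thesis .
          qed
          have th: "\<theta> (norm v) \<le> \<Theta>" unfolding \<Theta>_def using \<theta>mono[OF norm_ge_zero vb] wuv by simp
          have "aU * (Vf x z + (\<Sum>i\<in>UNIV. d i * \<eta> $ i) - Cc)
                + (DV x z (fp x u v, fo z u (h x + e) (h (\<psi> z))) + (\<Sum>i\<in>UNIV. d i * (- \<alpha>s i (\<eta> $ i) + c i * \<gamma> i (norm (node_part node i e))))) \<le> 0"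
            using diss \<alpha>V aV sum_pi th aUCc by (simp add: algebra_simps)
          then have "Dv \<le> 0" unfolding Dv_def by (simp add: mult_nonneg_nonpos)
          then show "\<exists>D. ((\<lambda>\<tau>. exp (aU * \<tau>) * (Wf (q (\<tau>, k)) - Cc)) has_real_derivative D) (at \<tau> within {tt k..s}) \<and> D \<le> 0"
            using dd' by blast
        qed
        have "exp (aU * s) * (Wf (q (s, k)) - Cc) \<le> exp (aU * tt k) * (Wf (q (tt k, k)) - Cc)"
          by (rule CL[OF _ ac L _ der]) (use True lipphi in auto)
        then show ?thesis unfolding \<phi>_def .
      qed
      have jumpstep: "Wf (q (tt (Suc k), Suc k)) \<le> Wf (q (tt (Suc k), k))" if k: "Suc k \<le> j" for k
      proof -
        have m1: "(tt (Suc k), k) \<in> E" using seg[of k "tt (Suc k)"] k ttmono[of k] by auto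
        have m2: "(tt (Suc k), Suc k) \<in> E" using seg[of "Suc k" "tt (Suc k)"] k ttmono[of "Suc k"] by auto
        have G: "q (tt (Suc k), Suc k) \<in> H_G node \<alpha>s \<sigma> \<epsilon> \<gamma> b (q (tt (Suc k), k))" using jump[OF m1 m2] by blast
        obtain x z e \<eta> where qe: "q (tt (Suc k), k) = (x, z, e, \<eta>)" by (cases "q (tt (Suc k), k)") auto
        have \<eta>0: "\<And>i. 0 \<le> \<eta> $ i" using inQ[OF m1] qe by (auto simp: H_Q_def)
        obtain i where qn: "q (tt (Suc k), Suc k) = (x, z, e - node_part node i e, \<chi> m. if m = i then b i * \<eta> $ i else \<eta> $ m)"
          using G unfolding H_G_def qe by (auto split: if_splits)
        have "(\<Sum>m\<in>UNIV. d m * (\<chi> m. if m = i then b i * \<eta> $ i else \<eta> $ m) $ m) \<le> (\<Sum>m\<in>UNIV. d m * \<eta> $ m)"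
        proof (rule sum_mono)
          fix m
          have "b i * \<eta> $ i \<le> \<eta> $ i" using b_rng[of i] \<eta>0[of i] by (simp add: mult_left_le_one_le)
          then show "d m * (\<chi> m. if m = i then b i * \<eta> $ i else \<eta> $ m) $ m \<le> d m * \<eta> $ m"
            using dpos[of m] by (auto intro: mult_left_mono)
        qed
        then show ?thesis unfolding Wf_def qn qe by simp
      qed
      have ind: "k \<le> j \<Longrightarrow> \<phi> (tt k) k \<le> \<phi> 0 0" for k
      proof (induction k)
        case 0
        then show ?case using tt0 by simp
      next
        case (Suc k)
        have kj: "k \<le> j" using Suc.prems by simp
        have "\<phi> (tt (Suc k)) (Suc k) \<le> \<phi> (tt (Suc k)) k"
          unfolding \<phi>_def using jumpstep[OF Suc.prems] by (intro mult_left_mono) auto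
        also have "\<dots> \<le> \<phi> (tt k) k" using flowstep[OF kj] ttmono[OF kj] by auto
        also have "\<dots> \<le> \<phi> 0 0" using Suc.IH kj by blast
        finally show ?case .
      qed
      have "\<phi> t j \<le> \<phi> 0 0" using flowstep[OF order_refl tin] ind[OF order_refl] by linarith
      then have A: "exp (aU * t) * (Wf (q (t, j)) - Cc) \<le> Wf (q (0, 0)) - Cc" unfolding \<phi>_def by simp
      have "Wf (q (t, j)) - Cc = exp (- aU * t) * (exp (aU * t) * (Wf (q (t, j)) - Cc))"
        by (simp add: exp_minus field_simps)
      also have "\<dots> \<le> exp (- aU * t) * (Wf (q (0, 0)) - Cc)" using A by (intro mult_left_mono) auto
      finally have B: "Wf (q (t, j)) \<le> exp (- aU * t) * Wf (q (0, 0)) + Cc - exp (- aU * t) * Cc"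
        by (simp add: algebra_simps)
      have "0 \<le> exp (- aU * t) * Cc" using Cc0 by simp
      then show ?thesis using B unfolding Cc_def \<Theta>_def by linarith
    qed
    show "\<forall>(t, j)\<in>E.
            Vf (fst (q (t, j))) (fst (snd (q (t, j))))
              + (\<Sum>i\<in>UNIV. d i * (snd (snd (snd (q (t, j))))) $ i)
            \<le> exp (- aU * t) * (Vf (fst (q (0, 0))) (fst (snd (q (0, 0))))
                   + (\<Sum>i\<in>UNIV. d i * (snd (snd (snd (q (0, 0))))) $ i))
              + \<mu> + \<theta> (ess_sup_norm (\<lambda>s. snd (w s)) 0 t) / aU"
      using main unfolding Wf_def by blast
  qed
qed

end
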